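(* Let $\mathfrak{g}=\mathfrak{so}_{2r+1}$, $r\geqslant 3$, with Cartan subalgebra $\mathfrak{h}$, roots $\{\pm\varepsilon_i\pm\varepsilon_j,\pm\varepsilon_i\}$, simple roots $\alpha_1,\dots,\alpha_r$ (Bourbaki numbering), fundamental weights $\varpi_1,\dots,\varpi_r$, and adjoint group $G$; identify $\mathfrak{g}^*\cong\mathfrak{g}$ and $\mathfrak{h}^*\cong\mathfrak{h}$ via the normalized invariant form. Let $W_2\subset S^2(\mathfrak{g})$ be the $\mathfrak{g}$-submodule generated by $w_2=e_\theta e_{\theta_2}-e_{\alpha_2+\theta_2}e_{\alpha_1+\alpha_2+\alpha_3+\theta_2}-e_{\alpha_2+\alpha_3+\theta_2}e_{\alpha_1+\alpha_2+\theta_2}$ (with $\theta$ the highest root and $\theta_2$ the highest root of the subsystem generated by $\alpha_3,\dots,\alpha_r$, and $e_\alpha$ Chevalley root vectors), and let $V(W_2)$ be the zero locus in $\mathfrak{g}^*$ of the ideal generated by $W_2$. Let $\lambda$ be a nonzero semisimple element of $\mathfrak{g}^*\cong\mathfrak{g}$ lying in $V(W_2)$. Then either $\lambda\in G.\mathbb{C}\varpi_1$, or $\lambda\in G.\mathbb{C}(-\varpi_{i-1}+\varpi_i)$ for some $i\in\{2,\dots,r-1\}$, or $\lambda\in G.\mathbb{C}(-\varpi_{r-1}+2\varpi_r)$. Moreover, for $\lambda\in\mathfrak{h}^*$, $\lambda\in V(W_2)$ if and only if $\lambda\in\bigcup_{i=1}^r\mathbb{C}\varepsilon_i=G.\mathbb{C}\varepsilon_1$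 (intersected with $\mathfrak{h}^*$). *)

theory Defs
  imports "Jordan_Normal_Form.Determinant"
begin

text \<open>V = C^(2r+1) with basis v_1..v_r, v_0, v_(-r)..v_(-1); the vector v_i (i>0) has
  index i-1, v_0 has index r, v_(-i) has index 2r+1-i.  The invariant symmetric
  bilinear form is the anti-diagonal matrix J, so B(v_i, v_(-i)) = 1 = B(v_0,v_0).\<close>

definition dimV :: "nat \<Rightarrow> nat" where
  "dimV r = 2 * r + 1"

definition idx :: "nat \<Rightarrow> int \<Rightarrow> nat" where
  "idx r i = (if i > 0 then nat i - 1 else if i = 0 then r else nat (int (2 * r + 1) + i))"

definition Emat :: "nat \<Rightarrow> int \<Rightarrow> int \<Rightarrow> complex mat" where
  "Emat r a b = mat (dimV r) (dimV r) (\<lambda>(p, q). if p = idx r a \<and> q = idx r b then 1 else 0)"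

definition Jform :: "nat \<Rightarrow> complex mat" where
  "Jform r = mat (dimV r) (dimV r) (\<lambda>(p, q). if p + q = 2 * r then 1 else 0)"

definition so :: "nat \<Rightarrow> complex mat set" where
  "so r = {X \<in> carrier_mat (dimV r) (dimV r).
            transpose_mat X * Jform r + Jform r * X = 0\<^sub>m (dimV r) (dimV r)}"

text \<open>The adjoint group of so_(2r+1) is SO_(2r+1) acting by conjugation.\<close>
definition SOgrp :: "nat \<Rightarrow> complex mat set" where
  "SOgrp r = {g \<in> carrier_mat (dimV r) (dimV r).
               transpose_mat g * Jform r * g = Jform r \<and> det g = 1}"

text \<open>G.S : the union of the adjoint orbits of elements of S (g x g^-1 = mu iff g x = mu g).\<close>
definition orbit :: "nat \<Rightarrow> complex mat set \<Rightarrow> complex mat set" where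
  "orbit r S = {\<mu> \<in> carrier_mat (dimV r) (dimV r). \<exists>g \<in> SOgrp r. \<exists>x \<in> S. g * x = \<mu> * g}"

definition cline :: "complex mat \<Rightarrow> complex mat set" where
  "cline A = {c \<cdot>\<^sub>m A | c. True}"

definition mtrace :: "complex mat \<Rightarrow> complex" where
  "mtrace A = (\<Sum>i<dim_row A. A $$ (i, i))"

text \<open>Linear form on g* = g attached to a \<in> g (invariant form, up to a nonzero scalar).\<close>
definition ell :: "complex mat \<Rightarrow> complex mat \<Rightarrow> complex" where
  "ell a l = mtrace (a * l)"

text \<open>Chevalley root vectors (needed ones).  e_(eps_i + eps_j) = E_(i,-j) - E_(j,-i), except
  that the sign of e_(eps_2+eps_3) is reversed (sign convention);
  e_(eps_i) = E_(i,0) - E_(0,-i); e_(eps_i - eps_j) = E_(i,j) - E_(-j,-i).\<close>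
definition epp :: "nat \<Rightarrow> int \<Rightarrow> int \<Rightarrow> complex mat" where
  "epp r i j = (if (i, j) = (2, 3) then -1 else 1) \<cdot>\<^sub>m (Emat r i (-j) - Emat r j (-i))"

definition esh :: "nat \<Rightarrow> int \<Rightarrow> complex mat" where
  "esh r i = Emat r i 0 - Emat r 0 (-i)"

text \<open>Elements of S^2(g) as formal sums  sum c * a * b  (a, b \<in> g), viewed as quadratic
  functions on g* = g.\<close>
type_synonym sym2 = "(complex \<times> complex mat \<times> complex mat) list"

definition eval2 :: "sym2 \<Rightarrow> complex mat \<Rightarrow> complex" where
  "eval2 s l = (\<Sum>(c, a, b) \<leftarrow> s. c * ell a l * ell b l)"

definition act :: "complex mat \<Rightarrow> sym2 \<Rightarrow> sym2" where
  "act y s = concat (map (\<lambda>(c, a, b). [(c, y * a - a * y, b), (c, a, y * b - b * y)]) s)"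

text \<open>w_2 = e_theta e_theta2 - e_(alpha2+theta2) e_(alpha1+alpha2+alpha3+theta2)
            - e_(alpha2+alpha3+theta2) e_(alpha1+alpha2+theta2), written in eps-coordinates:
  for r \<ge> 4: theta = eps1+eps2, theta2 = eps3+eps4, and the roots are
     eps2+eps4, eps1+eps3, eps2+eps3, eps1+eps4;
  for r = 3: theta2 = alpha3 = eps3, and the roots are eps2, eps1+eps3, eps2+eps3, eps1.\<close>
definition w2 :: "nat \<Rightarrow> sym2" where
  "w2 r = (if r \<ge> 4 then
      [(1, epp r 1 2, epp r 3 4), (-1, epp r 2 4, epp r 1 3), (-1, epp r 2 3, epp r 1 4)]
    else
      [(1, epp r 1 2, esh r 3), (-1, esh r 2, epp r 1 3), (-1, epp r 2 3, esh r 1)])"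

inductive_set W2mod :: "nat \<Rightarrow> sym2 set" for r :: nat where
  gen: "w2 r \<in> W2mod r"
| zero: "[] \<in> W2mod r"
| add: "s \<in> W2mod r \<Longrightarrow> t \<in> W2mod r \<Longrightarrow> s @ t \<in> W2mod r"
| smult: "s \<in> W2mod r \<Longrightarrow> map (\<lambda>(c, a, b). (k * c, a, b)) s \<in> W2mod r"
| act: "y \<in> so r \<Longrightarrow> s \<in> W2mod r \<Longrightarrow> act y s \<in> W2mod r"

definition VW2 :: "nat \<Rightarrow> complex mat set" where
  "VW2 r = {l \<in> so r. \<forall>s \<in> W2mod r. eval2 s l = 0}"

text \<open>Cartan subalgebra h (diagonal matrices in so); hvec r c is the element of h = h*
  corresponding to the weight  sum_i c_i eps_i  (identification by the normalized form).\<close>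
definition hvec :: "nat \<Rightarrow> (nat \<Rightarrow> complex) \<Rightarrow> complex mat" where
  "hvec r c = mat (dimV r) (dimV r) (\<lambda>(p, q). if p = q then
      (if p < r then c (p + 1) else if p = r then 0 else - c (2 * r + 1 - p)) else 0)"

definition hcart :: "nat \<Rightarrow> complex mat set" where
  "hcart r = range (hvec r)"

definition eps :: "nat \<Rightarrow> nat \<Rightarrow> complex" where
  "eps i = (\<lambda>j. if j = i then 1 else 0)"

definition fw :: "nat \<Rightarrow> nat \<Rightarrow> nat \<Rightarrow> complex" where
  "fw r i = (\<lambda>j. if i < r then (if j \<le> i then 1 else 0) else 1 / 2)"

definition semisimple :: "complex mat \<Rightarrow> bool" where
  "semisimple A \<longleftrightarrow> (\<exists>D. diagonal_mat D \<and> similar_mat A D)"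

end

theory Submission
  imports Defs
begin


lemma mult_entry:
  assumes "A \<in> carrier_mat n m" "B \<in> carrier_mat m k" "i < n" "j < k"
  shows "(A * B) $$ (i, j) = (\<Sum>l<m. A $$ (i, l) * B $$ (l, j))"
  using assms by (auto simp: scalar_prod_def lessThan_atLeast0 intro!: sum.cong)

lemma Jform_carrier[simp]: "Jform r \<in> carrier_mat (dimV r) (dimV r)"
  by (simp add: Jform_def)

lemma Jform_dim[simp]: "dim_row (Jform r) = dimV r" "dim_col (Jform r) = dimV r"
  by (simp_all add: Jform_def)

lemma Jform_idx: "i < dimV r \<Longrightarrow> j < dimV r \<Longrightarrow> Jform r $$ (i,j) = (if i + j = 2*r then 1 else 0)"
  by (simp add: Jform_def)

lemma sum_delta_J:
  assumes "j < dimV r"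
  shows "(\<Sum>k<dimV r. f k * (if k + j = 2*r then 1 else 0)) = (f (2*r - j) :: complex)"
proof -
  have "(\<Sum>k<dimV r. f k * (if k + j = 2*r then 1 else 0)) = (\<Sum>k<dimV r. if k = 2*r - j then f k else 0)"
    using assms by (intro sum.cong) (auto simp: dimV_def)
  also have "\<dots> = f (2*r - j)" using assms by (simp add: dimV_def)
  finally show ?thesis .
qed

lemma sum_delta_J2:
  assumes "j < dimV r"
  shows "(\<Sum>k<dimV r. (if j + k = 2*r then 1 else 0) * f k) = (f (2*r - j) :: complex)"
proof -
  have "(\<Sum>k<dimV r. (if j + k = 2*r then 1 else 0) * f k) = (\<Sum>k<dimV r. if k = 2*r - j then f k else 0)"
    using assms by (intro sum.cong) (auto simp: dimV_def)
  also have "\<dots> = f (2*r - j)" using assms by (simp add: dimV_def)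
  finally show ?thesis .
qed

lemma so_iff:
  "X \<in> so r \<longleftrightarrow> X \<in> carrier_mat (dimV r) (dimV r) \<and>
     (\<forall>i<dimV r. \<forall>j<dimV r. X $$ (2*r-i, j) + X $$ (2*r-j, i) = 0)"
proof (cases "X \<in> carrier_mat (dimV r) (dimV r)")
  case True
  have dX[simp]: "dim_row X = dimV r" "dim_col X = dimV r" using True by auto
  have e: "(transpose_mat X * Jform r + Jform r * X) $$ (i,j) = X $$ (2*r-j, i) + X $$ (2*r-i, j)"
    if "i < dimV r" "j < dimV r" for i j
  proof -
    have "(transpose_mat X * Jform r) $$ (i,j) = (\<Sum>k<dimV r. X $$ (k,i) * (if k + j = 2*r then 1 else 0))"
      using True that by (subst mult_entry[of _ "dimV r" "dimV r" _ "dimV r"]) (auto simp: Jform_idx)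
    also have "\<dots> = X $$ (2*r-j, i)" by (rule sum_delta_J[OF that(2)])
    finally have 1: "(transpose_mat X * Jform r) $$ (i,j) = X $$ (2*r-j, i)" .
    have "(Jform r * X) $$ (i,j) = (\<Sum>k<dimV r. (if i + k = 2*r then 1 else 0) * X $$ (k,j))"
      using True that by (subst mult_entry[of _ "dimV r" "dimV r" _ "dimV r"]) (auto simp: Jform_idx)
    also have "\<dots> = X $$ (2*r-i, j)" by (rule sum_delta_J2[OF that(1)])
    finally have 2: "(Jform r * X) $$ (i,j) = X $$ (2*r-i, j)" .
    show ?thesis using True that 1 2 by (subst index_add_mat) auto
  qed
  show ?thesis
  proof
    assume "X \<in> so r"
    hence z: "transpose_mat X * Jform r + Jform r * X = 0\<^sub>m (dimV r) (dimV r)" by (simp add: so_def)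
    show "X \<in> carrier_mat (dimV r) (dimV r) \<and> (\<forall>i<dimV r. \<forall>j<dimV r. X $$ (2*r-i, j) + X $$ (2*r-j, i) = 0)"
      using True e[symmetric] arg_cong[OF z, of "\<lambda>M. M $$ (_,_)"] by (auto simp: add.commute)
  next
    assume h: "X \<in> carrier_mat (dimV r) (dimV r) \<and> (\<forall>i<dimV r. \<forall>j<dimV r. X $$ (2*r-i, j) + X $$ (2*r-j, i) = 0)"
    have "transpose_mat X * Jform r + Jform r * X = 0\<^sub>m (dimV r) (dimV r)"
      using True e h by (intro eq_matI) (auto simp: add.commute)
    thus "X \<in> so r" using True by (simp add: so_def)
  qed
qed (auto simp: so_def)


lemma mtrace_mult:
  assumes "A \<in> carrier_mat n n" "B \<in> carrier_mat n n"
  shows "mtrace (A * B) = (\<Sum>i<n. \<Sum>k<n. A $$ (i,k) * B $$ (k,i))"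
proof -
  have "\<And>i. i<n \<Longrightarrow> (A*B)$$(i,i) = (\<Sum>k<n. A $$ (i,k) * B $$ (k,i))"
    using mult_entry[OF assms] by blast
  thus ?thesis unfolding mtrace_def using assms by simp
qed

lemma mtrace_comm:
  assumes "A \<in> carrier_mat n n" "B \<in> carrier_mat n n"
  shows "mtrace (A * B) = mtrace (B * A)"
  unfolding mtrace_mult[OF assms] mtrace_mult[OF assms(2,1)]
  by (subst sum.swap) (simp add: mult.commute)

lemma ell_expand:
  assumes "a \<in> carrier_mat n n" "L \<in> carrier_mat n n"
  shows "ell a L = (\<Sum>i<n. \<Sum>k<n. a $$ (i,k) * L $$ (k,i))"
  unfolding ell_def using mtrace_mult[OF assms] .

lemma ell_add2:
  assumes "a \<in> carrier_mat n n" "X \<in> carrier_mat n n" "Y \<in> carrier_mat n n"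
  shows "ell a (X + Y) = ell a X + ell a Y"
  using assms by (simp add: ell_expand[of _ n] distrib_left sum.distrib)

lemma ell_minus2:
  assumes "a \<in> carrier_mat n n" "X \<in> carrier_mat n n" "Y \<in> carrier_mat n n"
  shows "ell a (X - Y) = ell a X - ell a Y"
proof -
  have m: "X - Y \<in> carrier_mat n n" using assms by auto
  show ?thesis using assms by (simp add: ell_expand[OF assms(1) m] ell_expand[OF assms(1,2)] ell_expand[OF assms(1,3)] right_diff_distrib sum_subtractf)
qed

lemma ell_smult2:
  assumes "a \<in> carrier_mat n n" "X \<in> carrier_mat n n"
  shows "ell a (k \<cdot>\<^sub>m X) = k * ell a X"
  using assms by (simp add: ell_expand[of _ n] sum_distrib_left ac_simps)

lemma ell_minus1:
  assumes "a \<in> carrier_mat n n" "b \<in> carrier_mat n n" "X \<in> carrier_mat n n"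
  shows "ell (a - b) X = ell a X - ell b X"
proof -
  have m: "a - b \<in> carrier_mat n n" using assms by auto
  show ?thesis using assms by (simp add: ell_expand[OF m assms(3)] ell_expand[OF assms(1,3)] ell_expand[OF assms(2,3)] left_diff_distrib sum_subtractf)
qed

lemma ell_smult1:
  assumes "a \<in> carrier_mat n n" "X \<in> carrier_mat n n"
  shows "ell (k \<cdot>\<^sub>m a) X = k * ell a X"
  using assms by (simp add: ell_expand[of _ n] sum_distrib_left ac_simps)

lemma ell_comm:
  assumes "a \<in> carrier_mat n n" "y \<in> carrier_mat n n" "X \<in> carrier_mat n n"
  shows "ell (y * a - a * y) X = ell a (X * y - y * X)"
proof -
  have "ell (y * a - a * y) X = ell (y*a) X - ell (a*y) X"
    using assms by (intro ell_minus1) auto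
  also have "ell (y*a) X = mtrace (y * (a * X))" unfolding ell_def using assms by simp
  also have "\<dots> = mtrace ((a * X) * y)" using assms by (intro mtrace_comm) auto
  also have "\<dots> = ell a (X * y)" unfolding ell_def using assms by simp
  also have "ell (a*y) X = mtrace (a * (y * X))" unfolding ell_def using assms by simp
  also have "\<dots> = ell a (y * X)" unfolding ell_def ..
  also have "ell a (X * y) - ell a (y * X) = ell a (X * y - y * X)"
    using assms by (intro ell_minus2[symmetric]) auto
  finally show ?thesis .
qed

definition cs :: "nat \<Rightarrow> sym2 \<Rightarrow> bool" where
  "cs r s \<longleftrightarrow> (\<forall>(c,a,b) \<in> set s. a \<in> carrier_mat (dimV r) (dimV r) \<and> b \<in> carrier_mat (dimV r) (dimV r))"

definition Bs :: "sym2 \<Rightarrow> complex mat \<Rightarrow> complex mat \<Rightarrow> complex" where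
  "Bs s X Y = (\<Sum>(c, a, b) \<leftarrow> s. c * (ell a X * ell b Y + ell a Y * ell b X))"

lemma eval2_Nil[simp]: "eval2 [] X = 0" by (simp add: eval2_def)
lemma eval2_Cons[simp]: "eval2 ((c,a,b) # s) X = c * ell a X * ell b X + eval2 s X"
  by (simp add: eval2_def)
lemma eval2_append[simp]: "eval2 (s @ t) X = eval2 s X + eval2 t X"
  by (simp add: eval2_def)
lemma Bs_Nil[simp]: "Bs [] X Y = 0" by (simp add: Bs_def)
lemma Bs_Cons[simp]: "Bs ((c,a,b) # s) X Y = c * (ell a X * ell b Y + ell a Y * ell b X) + Bs s X Y"
  by (simp add: Bs_def)
lemma cs_Cons[simp]: "cs r ((c,a,b) # s) \<longleftrightarrow> a \<in> carrier_mat (dimV r) (dimV r) \<and> b \<in> carrier_mat (dimV r) (dimV r) \<and> cs r s"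
  by (simp add: cs_def)
lemma cs_append[simp]: "cs r (s @ t) \<longleftrightarrow> cs r s \<and> cs r t"
  unfolding cs_def set_append ball_Un by blast
lemma cs_Nil[simp]: "cs r []" by (simp add: cs_def)

lemma eval2_smult: "eval2 (map (\<lambda>(c, a, b). (k * c, a, b)) s) X = k * eval2 s X"
  by (induction s) (auto simp: algebra_simps)

lemma eval2_add:
  assumes "cs r s" "X \<in> carrier_mat (dimV r) (dimV r)" "Y \<in> carrier_mat (dimV r) (dimV r)"
  shows "eval2 s (X + Y) = eval2 s X + eval2 s Y + Bs s X Y"
  using assms by (induction s rule: list.induct) (auto simp: ell_add2[of _ "dimV r"] algebra_simps)

lemma Bs_add:
  assumes "cs r s" "X \<in> carrier_mat (dimV r) (dimV r)" "Y \<in> carrier_mat (dimV r) (dimV r)" "Z \<in> carrier_mat (dimV r) (dimV r)"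
  shows "Bs s X (Y + Z) = Bs s X Y + Bs s X Z"
  using assms by (induction s rule: list.induct) (auto simp: ell_add2[of _ "dimV r"] algebra_simps)

lemma act_Cons[simp]: "act y ((c,a,b) # s) = [(c, y * a - a * y, b), (c, a, y * b - b * y)] @ act y s"
  by (simp add: act_def)
lemma act_Nil[simp]: "act y [] = []" by (simp add: act_def)

lemma eval2_act:
  assumes "cs r s" "y \<in> carrier_mat (dimV r) (dimV r)" "X \<in> carrier_mat (dimV r) (dimV r)"
  shows "eval2 (act y s) X = Bs s X (X * y - y * X)"
  using assms by (induction s rule: list.induct) (auto simp: ell_comm[of _ "dimV r"] algebra_simps)

lemma cs_act:
  assumes "cs r s" "y \<in> carrier_mat (dimV r) (dimV r)"
  shows "cs r (act y s)"
  using assms by (induction s rule: list.induct) (auto intro!: minus_carrier_mat mult_carrier_mat)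


definition Lam :: "nat \<Rightarrow> (nat \<Rightarrow> complex) \<Rightarrow> (nat \<Rightarrow> complex) \<Rightarrow> complex mat" where
  "Lam r u w = mat (dimV r) (dimV r) (\<lambda>(i,j). u i * w (2*r-j) - w i * u (2*r-j))"

definition mv :: "nat \<Rightarrow> complex mat \<Rightarrow> (nat \<Rightarrow> complex) \<Rightarrow> nat \<Rightarrow> complex" where
  "mv r y u i = (\<Sum>k<dimV r. y $$ (i,k) * u k)"

lemma Lam_carrier[simp]: "Lam r u w \<in> carrier_mat (dimV r) (dimV r)"
  by (simp add: Lam_def)
lemma Lam_dim[simp]: "dim_row (Lam r u w) = dimV r" "dim_col (Lam r u w) = dimV r"
  by (simp_all add: Lam_def)
lemma Lam_idx[simp]: "i < dimV r \<Longrightarrow> j < dimV r \<Longrightarrow> Lam r u w $$ (i,j) = u i * w (2*r-j) - w i * u (2*r-j)"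
  by (simp add: Lam_def)

lemma sum_rev: "(\<Sum>k<dimV r. f (2*r - k)) = (\<Sum>k<dimV r. f k)"
  by (rule sum.reindex_bij_witness[where i="\<lambda>k. 2*r-k" and j="\<lambda>k. 2*r-k"]) (auto simp: dimV_def)

lemma so_carrier: "y \<in> so r \<Longrightarrow> y \<in> carrier_mat (dimV r) (dimV r)"
  by (simp add: so_def)

lemma so_entry:
  assumes "y \<in> so r" "k < dimV r" "j < dimV r"
  shows "y $$ (k, j) = - y $$ (2*r - j, 2*r - k)"
proof -
  have "2*r - k < dimV r" using assms by (auto simp: dimV_def)
  from assms(1)[unfolded so_iff] this assms(3)
  have "y $$ (2*r - (2*r-k), j) + y $$ (2*r - j, 2*r - k) = 0" by blast
  moreover have "2*r - (2*r-k) = k" using assms by (auto simp: dimV_def)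
  ultimately show ?thesis by (simp add: eq_neg_iff_add_eq_0)
qed

lemma so_sum_rev:
  assumes "y \<in> so r" "j < dimV r"
  shows "(\<Sum>k<dimV r. x (2*r-k) * y $$ (k, j)) = - mv r y x (2*r - j)"
proof -
  have "(\<Sum>k<dimV r. x (2*r-k) * y $$ (k, j)) = (\<Sum>k<dimV r. - (y $$ (2*r-j, 2*r-k) * x (2*r-k)))"
    using assms by (intro sum.cong) (auto simp: so_entry[OF assms(1) _ assms(2)])
  also have "\<dots> = (\<Sum>k<dimV r. - (y $$ (2*r-j, k) * x k))"
    by (rule sum_rev[where f="\<lambda>k. - (y $$ (2*r-j, k) * x k)"])
  also have "\<dots> = - mv r y x (2*r - j)" by (simp add: mv_def sum_negf)
  finally show ?thesis .
qed

lemma Lam_comm: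
  assumes "y \<in> so r"
  shows "Lam r u w * y - y * Lam r u w = Lam r u (\<lambda>i. - mv r y w i) + Lam r (\<lambda>i. - mv r y u i) w"
proof -
  have yc: "y \<in> carrier_mat (dimV r) (dimV r)" using so_carrier[OF assms] .
  show ?thesis
  proof (rule eq_matI)
    fix i j assume ij: "i < dim_row (Lam r u (\<lambda>i. - mv r y w i) + Lam r (\<lambda>i. - mv r y u i) w)"
       "j < dim_col (Lam r u (\<lambda>i. - mv r y w i) + Lam r (\<lambda>i. - mv r y u i) w)"
    hence i: "i < dimV r" and j: "j < dimV r" by auto
    have 1: "(Lam r u w * y) $$ (i,j) = (\<Sum>k<dimV r. (u i * w (2*r-k) - w i * u (2*r-k)) * y $$ (k,j))"
      using yc i j by (subst mult_entry[of _ "dimV r" "dimV r" _ "dimV r"]) auto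
    also have "\<dots> = u i * (\<Sum>k<dimV r. w (2*r-k) * y $$ (k,j)) - w i * (\<Sum>k<dimV r. u (2*r-k) * y $$ (k,j))"
      by (simp only: sum_distrib_left sum_subtractf[symmetric]) (auto intro!: sum.cong simp: algebra_simps)
    also have "\<dots> = - u i * mv r y w (2*r-j) + w i * mv r y u (2*r-j)"
      using so_sum_rev[OF assms j] by simp
    finally have 1: "(Lam r u w * y) $$ (i,j) = - u i * mv r y w (2*r-j) + w i * mv r y u (2*r-j)" .
    have "(y * Lam r u w) $$ (i,j) = (\<Sum>k<dimV r. y $$ (i,k) * (u k * w (2*r-j) - w k * u (2*r-j)))"
      using yc i j by (subst mult_entry[of _ "dimV r" "dimV r" _ "dimV r"]) auto
    also have "\<dots> = mv r y u i * w (2*r-j) - mv r y w i * u (2*r-j)"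
      by (simp only: mv_def sum_distrib_right sum_subtractf[symmetric]) (auto intro!: sum.cong simp: algebra_simps)
    finally have 2: "(y * Lam r u w) $$ (i,j) = mv r y u i * w (2*r-j) - mv r y w i * u (2*r-j)" .
    have "2*r - j < dimV r" by (auto simp: dimV_def)
    show "(Lam r u w * y - y * Lam r u w) $$ (i, j) =
          (Lam r u (\<lambda>i. - mv r y w i) + Lam r (\<lambda>i. - mv r y u i) w) $$ (i, j)"
    proof -
      have "(Lam r u w * y - y * Lam r u w) $$ (i, j) = (Lam r u w * y) $$ (i,j) - (y * Lam r u w) $$ (i,j)"
        using i j yc by (intro index_minus_mat(1)) auto
      also have "\<dots> = - u i * mv r y w (2*r-j) + w i * mv r y u (2*r-j) - (mv r y u i * w (2*r-j) - mv r y w i * u (2*r-j))"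
        unfolding 1 2 ..
      finally show ?thesis using i j by (simp add: algebra_simps)
    qed
  qed (use yc in auto)
qed

lemma Lam_add2: "Lam r u w + Lam r u w' = Lam r u (\<lambda>i. w i + w' i)"
  by (rule eq_matI) (auto simp: algebra_simps)
lemma Lam_add1: "Lam r u w + Lam r u' w = Lam r (\<lambda>i. u i + u' i) w"
  by (rule eq_matI) (auto simp: algebra_simps)

lemma Bs_Lam2:
  assumes "cs r s" "\<forall>u w. eval2 s (Lam r u w) = 0"
  shows "Bs s (Lam r u w) (Lam r u w') = 0"
  using eval2_add[OF assms(1) Lam_carrier Lam_carrier, of u w u w'] assms(2)
  by (simp add: Lam_add2)

lemma Bs_Lam1:
  assumes "cs r s" "\<forall>u w. eval2 s (Lam r u w) = 0"
  shows "Bs s (Lam r u w) (Lam r u' w) = 0"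
  using eval2_add[OF assms(1) Lam_carrier Lam_carrier, of u w u' w] assms(2)
  by (simp add: Lam_add1)

lemma act_vanish:
  assumes "cs r s" "\<forall>u w. eval2 s (Lam r u w) = 0" "y \<in> so r"
  shows "eval2 (act y s) (Lam r u w) = 0"
proof -
  have yc: "y \<in> carrier_mat (dimV r) (dimV r)" using so_carrier[OF assms(3)] .
  have "eval2 (act y s) (Lam r u w) = Bs s (Lam r u w) (Lam r u w * y - y * Lam r u w)"
    by (rule eval2_act[OF assms(1) yc Lam_carrier])
  also have "\<dots> = Bs s (Lam r u w) (Lam r u (\<lambda>i. - mv r y w i)) + Bs s (Lam r u w) (Lam r (\<lambda>i. - mv r y u i) w)"
    unfolding Lam_comm[OF assms(3)] by (rule Bs_add[OF assms(1)]) auto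
  also have "\<dots> = 0" using Bs_Lam1[OF assms(1,2)] Bs_Lam2[OF assms(1,2)] by simp
  finally show ?thesis .
qed


declare minus_carrier_mat[simp]

lemma ind_mult: "(if P then 1 else 0) * (x::complex) = (if P then x else 0)" by simp
lemma mult_ind: "x * (if P then 1 else 0) = (if P then x else (0::complex))" by simp

lemma idx0[simp]: "idx r 0 = r" by (simp add: idx_def)
lemma idx0_lt[simp]: "r < dimV r" by (simp add: dimV_def)

lemma Emat_carrier[simp]: "Emat r a b \<in> carrier_mat (dimV r) (dimV r)"
  by (simp add: Emat_def)

lemma ell_Emat:
  assumes "idx r a < dimV r" "idx r b < dimV r" "X \<in> carrier_mat (dimV r) (dimV r)"
  shows "ell (Emat r a b) X = X $$ (idx r b, idx r a)"
proof -
  have "ell (Emat r a b) X = (\<Sum>i<dimV r. \<Sum>k<dimV r. Emat r a b $$ (i,k) * X $$ (k,i))"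
    by (rule ell_expand[OF Emat_carrier assms(3)])
  also have "\<dots> = (\<Sum>i<dimV r. if i = idx r a then (\<Sum>k<dimV r. if k = idx r b then X $$ (k,i) else 0) else 0)"
    by (intro sum.cong) (auto simp: Emat_def ind_mult sum.delta)
  also have "\<dots> = X $$ (idx r b, idx r a)" using assms by (simp add: sum.delta)
  finally show ?thesis .
qed

lemma epp_carrier[simp]: "epp r i j \<in> carrier_mat (dimV r) (dimV r)"
  by (simp add: epp_def)
lemma esh_carrier[simp]: "esh r i \<in> carrier_mat (dimV r) (dimV r)"
  by (simp add: esh_def)

lemma ell_epp:
  assumes "idx r i < dimV r" "idx r j < dimV r" "idx r (-i) < dimV r" "idx r (-j) < dimV r"
    "X \<in> carrier_mat (dimV r) (dimV r)"
  shows "ell (epp r i j) X = (if (i, j) = (2, 3) then -1 else 1) * (X $$ (idx r (-j), idx r i) - X $$ (idx r (-i), idx r j))"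
proof -
  let ?k = "(if (i, j) = (2, 3) then -1 else 1) :: complex"
  have "ell (epp r i j) X = ?k * ell (Emat r i (-j) - Emat r j (-i)) X"
    unfolding epp_def by (rule ell_smult1[OF _ assms(5)]) simp
  also have "ell (Emat r i (-j) - Emat r j (-i)) X = ell (Emat r i (-j)) X - ell (Emat r j (-i)) X"
    by (rule ell_minus1[OF _ _ assms(5)]) simp_all
  finally show ?thesis using assms by (simp add: ell_Emat)
qed

lemma ell_esh:
  assumes "idx r i < dimV r" "idx r (-i) < dimV r" "X \<in> carrier_mat (dimV r) (dimV r)"
  shows "ell (esh r i) X = X $$ (idx r 0, idx r i) - X $$ (idx r (-i), idx r 0)"
proof -
  have "ell (esh r i) X = ell (Emat r i 0) X - ell (Emat r 0 (-i)) X"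
    unfolding esh_def by (rule ell_minus1[OF _ _ assms(3)]) simp_all
  thus ?thesis using assms ell_Emat[of r i 0 X] ell_Emat[of r 0 "-i" X] by simp
qed

lemma idx_vals:
  assumes "r \<ge> 4"
  shows "idx r 1 = 0" "idx r 2 = 1" "idx r 3 = 2" "idx r 4 = 3"
    "idx r (-1) = 2*r" "idx r (-2) = 2*r - 1" "idx r (-3) = 2*r - 2" "idx r (-4) = 2*r - 3"
  using assms by (auto simp: idx_def nat_diff_distrib)

lemma idx_lt: "k \<le> int (2*r+1) \<Longrightarrow> idx r k < dimV r"
  by (auto simp: idx_def dimV_def)

lemma w2_cs: "cs r (w2 r)"
  by (simp add: w2_def)

lemma w2_vanish_ge4:
  assumes "r \<ge> 4"
  shows "eval2 (w2 r) (Lam r u w) = 0"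
proof -
  show ?thesis using assms
    apply (simp add: w2_def)
    apply (simp add: ell_epp idx_lt)
    apply (simp add: idx_vals[OF assms] dimV_def)
    apply (simp add: algebra_simps)
    done
qed

lemma w2_vanish_3:
  shows "eval2 (w2 3) (Lam 3 u w) = 0"
  apply (simp add: w2_def)
  apply (simp add: ell_epp ell_esh idx_lt)
  apply (simp add: idx_def dimV_def)
  apply (simp add: algebra_simps)
  done


lemma cs_smult: "cs r s \<Longrightarrow> cs r (map (\<lambda>(c, a, b). (k * c, a, b)) s)"
  unfolding cs_def by auto

lemma W2_cs_vanish:
  assumes "s \<in> W2mod r" "r \<ge> 3"
  shows "cs r s \<and> (\<forall>u w. eval2 s (Lam r u w) = 0)"
  using assms(1)
proof (induction rule: W2mod.induct)
  case gen
  show ?case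
  proof (cases "r = 3")
    case True thus ?thesis using w2_cs w2_vanish_3 by simp
  next
    case False thus ?thesis using w2_cs w2_vanish_ge4 assms(2) by simp
  qed
next
  case zero thus ?case by simp
next
  case (add s t) thus ?case by simp
next
  case (smult s k)
  from smult.IH have c: "cs r s" and v: "\<forall>u w. eval2 s (Lam r u w) = 0" by auto
  show ?case using cs_smult[OF c, of k] eval2_smult[of k s] v by simp
next
  case (act y s) thus ?case using cs_act so_carrier act_vanish by blast
qed

lemma Lam_so: "Lam r u w \<in> so r"
  unfolding so_iff by (auto simp: dimV_def algebra_simps)

lemma Lam_VW2: "r \<ge> 3 \<Longrightarrow> Lam r u w \<in> VW2 r"
  unfolding VW2_def using Lam_so W2_cs_vanish by blast


definition AA :: "nat \<Rightarrow> complex mat \<Rightarrow> nat \<Rightarrow> nat \<Rightarrow> complex" where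
  "AA r l i j = l $$ (2*r - i, j)"

definition pf :: "nat \<Rightarrow> nat \<Rightarrow> nat \<Rightarrow> nat \<Rightarrow> nat \<Rightarrow> complex mat \<Rightarrow> complex" where
  "pf r a b c d l = AA r l a b * AA r l c d - AA r l a c * AA r l b d + AA r l a d * AA r l b c"

definition Pset :: "nat \<Rightarrow> (complex mat \<Rightarrow> complex) set" where
  "Pset r = {f. \<exists>s\<in>W2mod r. \<forall>l\<in>so r. eval2 s l = f l}"

definition Ym :: "nat \<Rightarrow> nat \<Rightarrow> nat \<Rightarrow> complex mat" where
  "Ym r p q = mat (dimV r) (dimV r) (\<lambda>(i,j). of_bool (i = p \<and> j = q) - of_bool (i = 2*r-q \<and> j = 2*r-p))"

lemma so_skew:
  assumes "l \<in> so r" "i < dimV r" "j < dimV r"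
  shows "l $$ (2*r - i, j) = - l $$ (2*r - j, i)"
  using assms unfolding so_iff by (simp add: eq_neg_iff_add_eq_0)

lemma AA_skew: "l \<in> so r \<Longrightarrow> i < dimV r \<Longrightarrow> j < dimV r \<Longrightarrow> AA r l i j = - AA r l j i"
  unfolding AA_def by (rule so_skew)

lemma so_add: "X \<in> so r \<Longrightarrow> Y \<in> so r \<Longrightarrow> X + Y \<in> so r"
  unfolding so_iff by (auto simp: algebra_simps dimV_def) 

lemma so_comm:
  assumes l: "l \<in> so r" and y: "y \<in> so r"
  shows "l * y - y * l \<in> so r"
proof -
  have lc: "l \<in> carrier_mat (dimV r) (dimV r)" and yc: "y \<in> carrier_mat (dimV r) (dimV r)"
    using l y by (auto simp: so_def)
  have me: "(l * y - y * l) $$ (i,j) = (\<Sum>k<dimV r. l $$ (i,k) * y $$ (k,j)) - (\<Sum>k<dimV r. y $$ (i,k) * l $$ (k,j))"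
    if "i < dimV r" "j < dimV r" for i j
  proof -
    have "(l * y - y * l) $$ (i,j) = (l * y) $$ (i,j) - (y * l) $$ (i,j)"
      using that lc yc by (intro index_minus_mat(1)) auto
    thus ?thesis using mult_entry[OF lc yc that] mult_entry[OF yc lc that] by simp
  qed
  have key: "(\<Sum>k<dimV r. a $$ (2*r-i,k) * b $$ (k,j)) = (\<Sum>k<dimV r. b $$ (2*r-j,k) * a $$ (k,i))"
    if a: "a \<in> so r" and b: "b \<in> so r" and ij: "i < dimV r" "j < dimV r" for a b i j
  proof -
    have "(\<Sum>k<dimV r. a $$ (2*r-i,k) * b $$ (k,j)) = (\<Sum>k<dimV r. a $$ (2*r-k, i) * b $$ (2*r-j, 2*r-k))"
    proof (intro sum.cong refl)
      fix k assume k: "k \<in> {..<dimV r}"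
      have "a $$ (2*r-i,k) = - a $$ (2*r-k, i)" using so_skew[OF a ij(1)] k by auto
      moreover have "b $$ (k,j) = - b $$ (2*r-j, 2*r-k)" using so_entry[OF b _ ij(2)] k by auto
      ultimately show "a $$ (2*r-i,k) * b $$ (k,j) = a $$ (2*r-k, i) * b $$ (2*r-j, 2*r-k)" by simp
    qed
    also have "\<dots> = (\<Sum>k<dimV r. a $$ (k, i) * b $$ (2*r-j, k))"
      by (rule sum_rev[where f="\<lambda>k. a $$ (k, i) * b $$ (2*r-j, k)"])
    finally show ?thesis by (simp add: mult.commute)
  qed
  show ?thesis unfolding so_iff
  proof (intro conjI allI impI)
    show "l * y - y * l \<in> carrier_mat (dimV r) (dimV r)" using lc yc by auto
    fix i j assume ij: "i < dimV r" "j < dimV r"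
    have i': "2*r - i < dimV r" "2*r - j < dimV r" by (auto simp: dimV_def)
    show "(l * y - y * l) $$ (2*r-i, j) + (l * y - y * l) $$ (2*r-j, i) = 0"
      unfolding me[OF i'(1) ij(2)] me[OF i'(2) ij(1)]
      using key[OF l y ij] key[OF y l ij] by simp
  qed
qed

lemma Ym_so:
  assumes "p < dimV r" "q < dimV r"
  shows "Ym r p q \<in> so r"
  unfolding so_iff
proof (intro conjI allI impI)
  show "Ym r p q \<in> carrier_mat (dimV r) (dimV r)" by (simp add: Ym_def)
  fix i j assume ij: "i < dimV r" "j < dimV r"
  have i': "2*r - i < dimV r" "2*r - j < dimV r" by (auto simp: dimV_def)
  have e1: "(2*r-i = p \<and> j = q) = (2*r-j = 2*r-q \<and> i = 2*r-p)"
    using ij assms unfolding dimV_def by linarith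
  have e2: "(2*r-i = 2*r-q \<and> j = 2*r-p) = (2*r-j = p \<and> i = q)"
    using ij assms unfolding dimV_def by linarith
  show "Ym r p q $$ (2*r-i, j) + Ym r p q $$ (2*r-j, i) = 0"
    using i' ij by (simp add: Ym_def e1 e2)
qed

lemma Ym_carrier[simp]: "Ym r p q \<in> carrier_mat (dimV r) (dimV r)"
  by (simp add: Ym_def)
lemma Ym_dim[simp]: "dim_row (Ym r p q) = dimV r" "dim_col (Ym r p q) = dimV r"
  by (simp_all add: Ym_def)

lemma comm_Ym:
  assumes lc: "l \<in> carrier_mat (dimV r) (dimV r)" and pq: "p < dimV r" "q < dimV r"
    and ij: "i < dimV r" "j < dimV r"
  shows "(l * Ym r p q - Ym r p q * l) $$ (i,j) =
     l $$ (i,p) * of_bool (j = q) - l $$ (i, 2*r-q) * of_bool (j = 2*r-p)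
     - of_bool (i = p) * l $$ (q,j) + of_bool (i = 2*r-q) * l $$ (2*r-p, j)"
proof -
  have yc: "Ym r p q \<in> carrier_mat (dimV r) (dimV r)" by simp
  have "(l * Ym r p q - Ym r p q * l) $$ (i,j) = (l * Ym r p q) $$ (i,j) - (Ym r p q * l) $$ (i,j)"
    using ij lc by (intro index_minus_mat(1)) auto
  also have "(l * Ym r p q) $$ (i,j) = (\<Sum>k<dimV r. l $$ (i,k) * Ym r p q $$ (k,j))"
    by (rule mult_entry[OF lc yc ij])
  also have "\<dots> = (\<Sum>k<dimV r. (if k = p then l $$ (i,k) * of_bool (j = q) else 0)
       - (if k = 2*r-q then l $$ (i,k) * of_bool (j = 2*r-p) else 0))"
    using ij by (intro sum.cong) (auto simp: Ym_def)
  also have "\<dots> = l $$ (i,p) * of_bool (j = q) - l $$ (i, 2*r-q) * of_bool (j = 2*r-p)"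
    using pq by (simp add: sum_subtractf sum.delta dimV_def)
  also have "(Ym r p q * l) $$ (i,j) = (\<Sum>k<dimV r. Ym r p q $$ (i,k) * l $$ (k,j))"
    by (rule mult_entry[OF yc lc ij])
  also have "\<dots> = (\<Sum>k<dimV r. (if k = q then of_bool (i = p) * l $$ (k,j) else 0)
       - (if k = 2*r-p then of_bool (i = 2*r-q) * l $$ (k,j) else 0))"
    using ij by (intro sum.cong) (auto simp: Ym_def)
  also have "\<dots> = of_bool (i = p) * l $$ (q,j) - of_bool (i = 2*r-q) * l $$ (2*r-p, j)"
    using pq by (simp add: sum_subtractf sum.delta dimV_def)
  finally show ?thesis by simp
qed

lemma AA_comm_Ym:
  assumes lc: "l \<in> carrier_mat (dimV r) (dimV r)" and pq: "p < dimV r" "q < dimV r"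
    and ij: "i < dimV r" "j < dimV r"
  shows "AA r (l * Ym r p q - Ym r p q * l) i j =
     AA r l i p * of_bool (j = q) - AA r l i (2*r - q) * of_bool (j = 2*r - p)
     - of_bool (i = 2*r - p) * AA r l (2*r - q) j + of_bool (i = q) * AA r l p j"
proof -
  have i': "2*r - i < dimV r" by (auto simp: dimV_def)
  have e1: "(2*r - i = p) = (i = 2*r - p)" "(2*r - i = 2*r - q) = (i = q)"
    using ij pq by (auto simp: dimV_def)
  have e2: "2*r - (2*r - q) = q" "2*r - (2*r - p) = p" using pq by (auto simp: dimV_def)
  show ?thesis unfolding AA_def comm_Ym[OF lc pq i' ij(2)] e1 using e2 by simp
qed

lemma AA_add: "l \<in> carrier_mat (dimV r) (dimV r) \<Longrightarrow> m \<in> carrier_mat (dimV r) (dimV r) \<Longrightarrow>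
   i < dimV r \<Longrightarrow> j < dimV r \<Longrightarrow> AA r (l + m) i j = AA r l i j + AA r m i j"
  unfolding AA_def by (subst index_add_mat(1)) (auto simp: dimV_def)

definition Mf :: "nat \<Rightarrow> complex mat \<Rightarrow> nat \<Rightarrow> nat \<Rightarrow> nat \<Rightarrow> nat \<Rightarrow> complex" where
  "Mf r l p q i j = AA r l i p * of_bool (j = q) - AA r l i (2*r - q) * of_bool (j = 2*r - p)
     - of_bool (i = 2*r - p) * AA r l (2*r - q) j + of_bool (i = q) * AA r l p j"

lemma quad_expand:
  fixes x1 x2 x3 x4 x5 x6 y1 y2 y3 y4 y5 y6 :: complex
  shows "(x1+y1)*(x2+y2) - (x3+y3)*(x4+y4) + (x5+y5)*(x6+y6) - (x1*x2 - x3*x4 + x5*x6) - (y1*y2 - y3*y4 + y5*y6)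
    = x1*y2 + y1*x2 - x3*y4 - y3*x4 + x5*y6 + y5*x6"
  by (simp add: algebra_simps)

lemma pf_D_raw:
  assumes lc: "l \<in> carrier_mat (dimV r) (dimV r)" and pq: "p < dimV r" "q < dimV r"
    and abcd: "a < dimV r" "b < dimV r" "c < dimV r" "d < dimV r"
  defines "m \<equiv> l * Ym r p q - Ym r p q * l"
  shows "pf r a b c d (l + m) - pf r a b c d l - pf r a b c d m =
     AA r l a b * Mf r l p q c d + Mf r l p q a b * AA r l c d
   - AA r l a c * Mf r l p q b d - Mf r l p q a c * AA r l b d
   + AA r l a d * Mf r l p q b c + Mf r l p q a d * AA r l b c"
proof -
  have mc: "m \<in> carrier_mat (dimV r) (dimV r)" unfolding m_def using lc
    by (intro minus_carrier_mat mult_carrier_mat) auto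
  have A: "\<And>i j. i < dimV r \<Longrightarrow> j < dimV r \<Longrightarrow> AA r m i j = Mf r l p q i j"
    unfolding m_def Mf_def by (rule AA_comm_Ym[OF lc pq])
  note B = AA_add[OF lc mc]
  show ?thesis unfolding pf_def B[OF abcd(1,2)] B[OF abcd(3,4)] B[OF abcd(1,3)] B[OF abcd(2,4)]
      B[OF abcd(1,4)] B[OF abcd(2,3)] A[OF abcd(1,2)] A[OF abcd(3,4)] A[OF abcd(1,3)] A[OF abcd(2,4)]
      A[OF abcd(1,4)] A[OF abcd(2,3)]
    by (rule quad_expand)
qed


lemma so_carrier'[simp]: "l \<in> so r \<Longrightarrow> l \<in> carrier_mat (dimV r) (dimV r)"
  by (simp add: so_def)

lemma P_cong: "f \<in> Pset r \<Longrightarrow> (\<And>l. l \<in> so r \<Longrightarrow> f l = g l) \<Longrightarrow> g \<in> Pset r"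
  unfolding Pset_def by auto

lemma P_smult: "f \<in> Pset r \<Longrightarrow> (\<lambda>l. k * f l) \<in> Pset r"
proof -
  assume "f \<in> Pset r"
  then obtain s where s: "s \<in> W2mod r" "\<forall>l\<in>so r. eval2 s l = f l" unfolding Pset_def by auto
  have "map (\<lambda>(c, a, b). (k * c, a, b)) s \<in> W2mod r" using s(1) by (rule W2mod.smult)
  moreover have "\<forall>l\<in>so r. eval2 (map (\<lambda>(c, a, b). (k * c, a, b)) s) l = k * f l"
    using s(2) eval2_smult by simp
  ultimately show ?thesis unfolding Pset_def by blast
qed

lemma P_D:
  assumes r: "r \<ge> 3" and f: "f \<in> Pset r" and pq: "p < dimV r" "q < dimV r"
  shows "(\<lambda>l. f (l + (l * Ym r p q - Ym r p q * l)) - f l - f (l * Ym r p q - Ym r p q * l)) \<in> Pset r"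
proof -
  obtain s where s: "s \<in> W2mod r" "\<forall>l\<in>so r. eval2 s l = f l" using f unfolding Pset_def by auto
  have cs: "cs r s" using W2_cs_vanish[OF s(1) r] by blast
  have y: "Ym r p q \<in> so r" by (rule Ym_so[OF pq])
  have "act (Ym r p q) s \<in> W2mod r" by (rule W2mod.act[OF y s(1)])
  moreover have "\<forall>l\<in>so r. eval2 (act (Ym r p q) s) l = f (l + (l * Ym r p q - Ym r p q * l)) - f l - f (l * Ym r p q - Ym r p q * l)"
  proof
    fix l assume l: "l \<in> so r"
    let ?m = "l * Ym r p q - Ym r p q * l"
    have m: "?m \<in> so r" by (rule so_comm[OF l y])
    have "eval2 (act (Ym r p q) s) l = Bs s l ?m" by (rule eval2_act[OF cs]) (use l in auto)
    also have "\<dots> = eval2 s (l + ?m) - eval2 s l - eval2 s ?m"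
      using eval2_add[OF cs, of l ?m] l m by simp
    also have "\<dots> = f (l + ?m) - f l - f ?m" using s(2) l m so_add[OF l m] by simp
    finally show "eval2 (act (Ym r p q) s) l = f (l + ?m) - f l - f ?m" .
  qed
  ultimately show ?thesis unfolding Pset_def by blast
qed

definition G :: "nat \<Rightarrow> nat \<Rightarrow> nat \<Rightarrow> nat \<Rightarrow> nat \<Rightarrow> bool" where
  "G r a b c d \<longleftrightarrow> pf r a b c d \<in> Pset r"

lemma G_s12: "G r a b c d \<Longrightarrow> a < dimV r \<Longrightarrow> b < dimV r \<Longrightarrow> c < dimV r \<Longrightarrow> d < dimV r \<Longrightarrow> G r b a c d"
  unfolding G_def
  by (drule P_smult[where k="-1"], erule P_cong) (simp add: pf_def AA_skew[of _ r b a] algebra_simps)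

lemma G_s23: "G r a b c d \<Longrightarrow> a < dimV r \<Longrightarrow> b < dimV r \<Longrightarrow> c < dimV r \<Longrightarrow> d < dimV r \<Longrightarrow> G r a c b d"
  unfolding G_def
  by (drule P_smult[where k="-1"], erule P_cong) (simp add: pf_def AA_skew[of _ r c b] algebra_simps)

lemma G_s34: "G r a b c d \<Longrightarrow> a < dimV r \<Longrightarrow> b < dimV r \<Longrightarrow> c < dimV r \<Longrightarrow> d < dimV r \<Longrightarrow> G r a b d c"
  unfolding G_def
  by (drule P_smult[where k="-1"], erule P_cong) (simp add: pf_def AA_skew[of _ r d c] algebra_simps)


lemma G_CM:
  assumes r: "r \<ge> 3" and g: "G r a b c d"
    and lt: "a < dimV r" "b < dimV r" "c < dimV r" "d < dimV r" "p < dimV r"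
    and na: "a \<noteq> b" "a \<noteq> c" "a \<noteq> d"
    and np: "2*r - p \<noteq> a" "2*r - p \<noteq> b" "2*r - p \<noteq> c" "2*r - p \<noteq> d"
  shows "G r p b c d"
proof -
  have "(\<lambda>l. pf r a b c d (l + (l * Ym r p a - Ym r p a * l)) - pf r a b c d l - pf r a b c d (l * Ym r p a - Ym r p a * l)) \<in> Pset r"
    using P_D[OF r g[unfolded G_def] lt(5) lt(1)] .
  thus ?thesis unfolding G_def
  proof (rule P_cong)
    fix l assume l: "l \<in> so r"
    have lc: "l \<in> carrier_mat (dimV r) (dimV r)" using l by simp
    show "pf r a b c d (l + (l * Ym r p a - Ym r p a * l)) - pf r a b c d l - pf r a b c d (l * Ym r p a - Ym r p a * l) = pf r p b c d l"
      unfolding pf_D_raw[OF lc lt(5) lt(1) lt(1-4)]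
      using na np by (simp add: Mf_def pf_def algebra_simps)
  qed
qed

lemma AA_diag0: "l \<in> so r \<Longrightarrow> i < dimV r \<Longrightarrow> AA r l i i = 0"
  using AA_skew[of l r i i] by simp

lemma G_M2:
  assumes r: "r \<ge> 3" and g: "G r r x c d"
    and lt: "x < dimV r" "c < dimV r" "d < dimV r"
    and nx: "x \<noteq> r" and nc: "c \<noteq> r" "c \<noteq> x" and nd: "d \<noteq> r" "d \<noteq> x"
  shows "G r (2*r - x) x c d"
proof -
  have rl: "r < dimV r" by simp
  have pl: "2*r - x < dimV r" by (simp add: dimV_def)
  have "(\<lambda>l. pf r r x c d (l + (l * Ym r (2*r-x) r - Ym r (2*r-x) r * l)) - pf r r x c d l - pf r r x c d (l * Ym r (2*r-x) r - Ym r (2*r-x) r * l)) \<in> Pset r"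
    using P_D[OF r g[unfolded G_def] pl rl] .
  thus ?thesis unfolding G_def
  proof (rule P_cong)
    fix l assume l: "l \<in> so r"
    have lc: "l \<in> carrier_mat (dimV r) (dimV r)" using l by simp
    have e: "2*r - (2*r - x) = x" "2*r - r = r" using lt by (auto simp: dimV_def)
    have ne: "x \<noteq> 2*r - x" using nx lt by (auto simp: dimV_def)
    show "pf r r x c d (l + (l * Ym r (2*r-x) r - Ym r (2*r-x) r * l)) - pf r r x c d l - pf r r x c d (l * Ym r (2*r-x) r - Ym r (2*r-x) r * l) = pf r (2*r-x) x c d l"
      unfolding pf_D_raw[OF lc pl rl rl lt(1-3)] Mf_def e
      using nx nc nd ne AA_diag0[OF l rl] by (simp add: pf_def algebra_simps)
  qed
qed

lemma w2_pf:
  assumes r: "r \<ge> 3" and l: "l \<in> so r"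
  shows "eval2 (w2 r) l = 4 * pf r 0 1 2 3 l"
proof -
  have lc: "l \<in> carrier_mat (dimV r) (dimV r)" using l by simp
  have h: "\<And>i j. i < dimV r \<Longrightarrow> j < dimV r \<Longrightarrow> l $$ (2*r - i, j) = - l $$ (2*r - j, i)"
    using so_skew[OF l] .
  show ?thesis
  proof (cases "r = 3")
    case True
    show ?thesis using lc h[of 1 0] h[of 3 2] h[of 3 1] h[of 2 0] h[of 2 1] h[of 3 0] unfolding True
      apply (simp add: w2_def)
      apply (simp add: ell_epp ell_esh idx_lt)
      apply (simp add: idx_def dimV_def pf_def AA_def)
      done
  next
    case False
    hence r4: "r \<ge> 4" using r by simp
    show ?thesis using lc r4 h[of 1 0] h[of 3 2] h[of 3 1] h[of 2 0] h[of 2 1] h[of 3 0]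
      apply (simp add: w2_def)
      apply (simp add: ell_epp idx_lt)
      apply (simp add: idx_vals[OF r4] dimV_def pf_def AA_def)
      done
  qed
qed

lemma G_base: assumes r: "r \<ge> 3" shows "G r 0 1 2 3"
proof -
  let ?s = "map (\<lambda>(c, a, b). ((1/4) * c, a, b)) (w2 r)"
  have "?s \<in> W2mod r" by (intro W2mod.smult W2mod.gen)
  moreover have "\<forall>l\<in>so r. eval2 ?s l = pf r 0 1 2 3 l"
  proof
    fix l assume "l \<in> so r"
    have "eval2 ?s l = 1/4 * eval2 (w2 r) l" by (rule eval2_smult)
    also have "\<dots> = pf r 0 1 2 3 l" using w2_pf[OF r \<open>l \<in> so r\<close>] by simp
    finally show "eval2 ?s l = pf r 0 1 2 3 l" .
  qed
  ultimately show ?thesis unfolding G_def Pset_def by blast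
qed


lemma wlog4:
  fixes Q :: "nat \<Rightarrow> nat \<Rightarrow> nat \<Rightarrow> nat \<Rightarrow> bool"
  assumes s12: "\<And>a b c d. Q a b c d \<Longrightarrow> Q b a c d"
    and s23: "\<And>a b c d. Q a b c d \<Longrightarrow> Q a c b d"
    and s34: "\<And>a b c d. Q a b c d \<Longrightarrow> Q a b d c"
    and srt: "\<And>a b c d. a < b \<Longrightarrow> b < c \<Longrightarrow> c < d \<Longrightarrow> Q a b c d"
    and dist: "a \<noteq> b" "a \<noteq> c" "a \<noteq> d" "b \<noteq> c" "b \<noteq> d" "c \<noteq> d"
  shows "Q a b c d"
proof -
  have ins1: "Q a b c d" if h: "b < c" "c < d" "a \<noteq> b" "a \<noteq> c" "a \<noteq> d" for a b c d
  proof -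
    consider "a < b" | "b < a" "a < c" | "c < a" "a < d" | "d < a" using h by (metis linorder_neqE_nat)
    thus ?thesis
    proof cases
      case 1 thus ?thesis using that srt by blast
    next
      case 2 thus ?thesis using that srt[of b a c d] s12 by blast
    next
      case 3 thus ?thesis using that srt[of b c a d] s12 s23 by blast
    next
      case 4 thus ?thesis using that srt[of b c d a] s12 s23 s34 by blast
    qed
  qed
  have ins2: "Q a b c d" if h: "c < d" "b \<noteq> c" "b \<noteq> d" "a \<noteq> b" "a \<noteq> c" "a \<noteq> d" for a b c d
  proof -
    consider "b < c" | "c < b" "b < d" | "d < b" using h by (metis linorder_neqE_nat)
    thus ?thesis
    proof cases
      case 1 thus ?thesis using that ins1 by blast
    next
      case 2 thus ?thesis using that ins1[of c b d a] s23 by blast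
    next
      case 3 thus ?thesis using that ins1[of c d b a] s23 s34 by blast
    qed
  qed
  show ?thesis
  proof (cases "c < d")
    case True thus ?thesis using ins2 dist by blast
  next
    case False hence "d < c" using dist by linarith
    thus ?thesis using ins2[of d c b a] dist s34 by blast
  qed
qed

context
  fixes r :: nat
  assumes r3: "r \<ge> 3"
begin

abbreviation "n \<equiv> dimV r"

lemma CM1: "G r a b c d \<Longrightarrow> a < n \<Longrightarrow> b < n \<Longrightarrow> c < n \<Longrightarrow> d < n \<Longrightarrow> p < n \<Longrightarrow>
   a \<noteq> b \<Longrightarrow> a \<noteq> c \<Longrightarrow> a \<noteq> d \<Longrightarrow> 2*r-p \<noteq> a \<Longrightarrow> 2*r-p \<noteq> b \<Longrightarrow> 2*r-p \<noteq> c \<Longrightarrow> 2*r-p \<noteq> d \<Longrightarrow> G r p b c d"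
  using G_CM[OF r3] by blast

lemma CM2: "G r a b c d \<Longrightarrow> a < n \<Longrightarrow> b < n \<Longrightarrow> c < n \<Longrightarrow> d < n \<Longrightarrow> p < n \<Longrightarrow>
   b \<noteq> a \<Longrightarrow> b \<noteq> c \<Longrightarrow> b \<noteq> d \<Longrightarrow> 2*r-p \<noteq> a \<Longrightarrow> 2*r-p \<noteq> b \<Longrightarrow> 2*r-p \<noteq> c \<Longrightarrow> 2*r-p \<noteq> d \<Longrightarrow> G r a p c d"
  by (drule G_s12, simp_all, drule CM1, simp_all, drule G_s12, simp_all)

lemma CM3: "G r a b c d \<Longrightarrow> a < n \<Longrightarrow> b < n \<Longrightarrow> c < n \<Longrightarrow> d < n \<Longrightarrow> p < n \<Longrightarrow>
   c \<noteq> a \<Longrightarrow> c \<noteq> b \<Longrightarrow> c \<noteq> d \<Longrightarrow> 2*r-p \<noteq> a \<Longrightarrow> 2*r-p \<noteq> b \<Longrightarrow> 2*r-p \<noteq> c \<Longrightarrow> 2*r-p \<noteq> d \<Longrightarrow> G r a b p d"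
  by (drule G_s23, simp_all, drule CM2, simp_all, drule G_s23, simp_all)

lemma CM4: "G r a b c d \<Longrightarrow> a < n \<Longrightarrow> b < n \<Longrightarrow> c < n \<Longrightarrow> d < n \<Longrightarrow> p < n \<Longrightarrow>
   d \<noteq> a \<Longrightarrow> d \<noteq> b \<Longrightarrow> d \<noteq> c \<Longrightarrow> 2*r-p \<noteq> a \<Longrightarrow> 2*r-p \<noteq> b \<Longrightarrow> 2*r-p \<noteq> c \<Longrightarrow> 2*r-p \<noteq> d \<Longrightarrow> G r a b c p"
  by (drule G_s34, simp_all, drule CM3, simp_all, drule G_s34, simp_all)

end


context
  fixes r :: nat
  assumes r3: "r \<ge> 3"
begin

lemma lowne: "p \<le> r \<Longrightarrow> y \<le> r \<Longrightarrow> y \<noteq> p \<Longrightarrow> 2*r - p \<noteq> y"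
  by linarith

lemma lowlt: "y \<le> r \<Longrightarrow> y < dimV r"
  unfolding dimV_def by linarith

lemma low_move4:
  assumes g: "G r a b c d" and le: "a \<le> r" "b \<le> r" "c \<le> r" "d \<le> r" "p \<le> r"
    and dist: "a \<noteq> b" "a \<noteq> c" "a \<noteq> d" "b \<noteq> c" "b \<noteq> d" "c \<noteq> d"
    and np: "p \<noteq> a" "p \<noteq> b" "p \<noteq> c"
  shows "G r a b c p"
proof (cases "p = d")
  case True thus ?thesis using g by simp
next
  case False
  show ?thesis by (rule CM4[OF r3 g]) (simp_all add: le lowlt lowne dist dist[symmetric] np np[symmetric] False False[symmetric])
qed

lemma low_move3:
  assumes g: "G r a b c d" and le: "a \<le> r" "b \<le> r" "c \<le> r" "d \<le> r" "p \<le> r"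
    and dist: "a \<noteq> b" "a \<noteq> c" "a \<noteq> d" "b \<noteq> c" "b \<noteq> d" "c \<noteq> d"
    and np: "p \<noteq> a" "p \<noteq> b" "p \<noteq> d"
  shows "G r a b p d"
proof (cases "p = c")
  case True thus ?thesis using g by simp
next
  case False
  show ?thesis by (rule CM3[OF r3 g]) (simp_all add: le lowlt lowne dist dist[symmetric] np np[symmetric] False False[symmetric])
qed

lemma low_move2:
  assumes g: "G r a b c d" and le: "a \<le> r" "b \<le> r" "c \<le> r" "d \<le> r" "p \<le> r"
    and dist: "a \<noteq> b" "a \<noteq> c" "a \<noteq> d" "b \<noteq> c" "b \<noteq> d" "c \<noteq> d"
    and np: "p \<noteq> a" "p \<noteq> c" "p \<noteq> d"
  shows "G r a p c d"
proof (cases "p = b")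
  case True thus ?thesis using g by simp
next
  case False
  show ?thesis by (rule CM2[OF r3 g]) (simp_all add: le lowlt lowne dist dist[symmetric] np np[symmetric] False False[symmetric])
qed

lemma low_move1:
  assumes g: "G r a b c d" and le: "a \<le> r" "b \<le> r" "c \<le> r" "d \<le> r" "p \<le> r"
    and dist: "a \<noteq> b" "a \<noteq> c" "a \<noteq> d" "b \<noteq> c" "b \<noteq> d" "c \<noteq> d"
    and np: "p \<noteq> b" "p \<noteq> c" "p \<noteq> d"
  shows "G r p b c d"
proof (cases "p = a")
  case True thus ?thesis using g by simp
next
  case False
  show ?thesis by (rule CM1[OF r3 g]) (simp_all add: le lowlt lowne dist dist[symmetric] np np[symmetric] False False[symmetric])
qed

lemma G_low_sorted:
  assumes "t1 < t2" "t2 < t3" "t3 < t4" "t4 \<le> r"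
  shows "G r t1 t2 t3 t4"
proof -
  have g0: "G r 0 1 2 3" by (rule G_base[OF r3])
  have g1: "G r 0 1 2 t4" by (rule low_move4[OF g0]) (use assms r3 in auto)
  have g2: "G r 0 1 t3 t4" by (rule low_move3[OF g1]) (use assms r3 in auto)
  have g3: "G r 0 t2 t3 t4" by (rule low_move2[OF g2]) (use assms r3 in auto)
  show ?thesis by (rule low_move1[OF g3]) (use assms r3 in auto)
qed

lemma G_low:
  assumes le: "a \<le> r" "b \<le> r" "c \<le> r" "d \<le> r"
    and dist: "a \<noteq> b" "a \<noteq> c" "a \<noteq> d" "b \<noteq> c" "b \<noteq> d" "c \<noteq> d"
  shows "G r a b c d"
proof -
  let ?Q = "\<lambda>a b c d. a \<le> r \<longrightarrow> b \<le> r \<longrightarrow> c \<le> r \<longrightarrow> d \<le> r \<longrightarrow> G r a b c d"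
  have lt: "\<And>x. x \<le> r \<Longrightarrow> x < dimV r" by (simp add: dimV_def)
  have "?Q a b c d"
  proof (rule wlog4[where Q="?Q"])
    show "?Q b a c d" if "?Q a b c d" for a b c d using that G_s12 lt by blast
    show "?Q a c b d" if "?Q a b c d" for a b c d using that G_s23 lt by blast
    show "?Q a b d c" if "?Q a b c d" for a b c d using that G_s34 lt by blast
    show "?Q a b c d" if "a < b" "b < c" "c < d" for a b c d using that G_low_sorted by blast
  qed (use dist in auto)
  thus ?thesis using le by blast
qed

lemma flip1_br:
  assumes g: "G r x r c d" and lt: "x < dimV r" "c < dimV r" "d < dimV r"
    and dist: "x \<noteq> r" "x \<noteq> c" "x \<noteq> d" "r \<noteq> c" "r \<noteq> d" "c \<noteq> d"
    and np: "2*r - x \<noteq> c" "2*r - x \<noteq> d"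
  shows "G r (2*r - x) r c d"
proof -
  have rl: "r < dimV r" by simp
  have xl: "2*r - x < dimV r" by (simp add: dimV_def)
  have g1: "G r r x c d" by (rule G_s12[OF g lt(1) rl lt(2,3)])
  have g2: "G r (2*r-x) x c d" by (rule G_M2[OF r3 g1 lt]) (use dist in auto)
  have ne: "2*r - x \<noteq> r" "2*r - x \<noteq> x" using dist lt by (auto simp: dimV_def)
  have rr: "2*r - r = r" by simp
  show ?thesis by (rule CM2[OF r3 g2 xl lt(1) lt(2,3) rl]) (simp_all add: rr dist dist[symmetric] np np[symmetric] ne ne[symmetric])
qed

lemma flip1:
  assumes g: "G r x b c d" and lt: "x < dimV r" "b < dimV r" "c < dimV r" "d < dimV r"
    and dist: "x \<noteq> b" "x \<noteq> c" "x \<noteq> d" "b \<noteq> c" "b \<noteq> d" "c \<noteq> d"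
    and xr: "x \<noteq> r"
    and np: "2*r - x \<noteq> b" "2*r - x \<noteq> c" "2*r - x \<noteq> d"
  shows "G r (2*r - x) b c d"
proof -
  have rl: "r < dimV r" by simp
  have xl: "2*r - x < dimV r" by (simp add: dimV_def)
  have e: "2*r - (2*r - x) = x" using lt by (simp add: dimV_def)
  consider "r \<noteq> b" "r \<noteq> c" "r \<noteq> d" | "b = r" | "c = r" | "d = r" by blast
  thus ?thesis
  proof cases
    case 1
    have rr: "2*r - r = r" by simp
    have g1: "G r r b c d" by (rule CM1[OF r3 g lt rl]) (simp_all add: rr dist xr[symmetric] 1)
    show ?thesis by (rule CM1[OF r3 g1 rl lt(2-4) xl]) (simp_all add: e dist xr 1 1[symmetric])
  next
    case 2 thus ?thesis using flip1_br g lt dist np by blast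
  next
    case 3
    have g1: "G r x r b d" using G_s23[OF g lt] 3 by simp
    have g2: "G r (2*r-x) r b d" by (rule flip1_br[OF g1]) (use lt dist np 3 in auto)
    show ?thesis using G_s23[OF g2 xl rl lt(2) lt(4)] 3 by simp
  next
    case 4
    have g1: "G r x b r c" using G_s34[OF g lt] 4 by simp
    have g1': "G r x r b c" using G_s23[OF g1 lt(1,2) rl lt(3)] by simp
    have g2: "G r (2*r-x) r b c" by (rule flip1_br[OF g1']) (use lt dist np 4 in auto)
    have g3: "G r (2*r-x) b r c" using G_s23[OF g2 xl rl lt(2,3)] by simp
    show ?thesis using G_s34[OF g3 xl lt(2) rl lt(3)] 4 by simp
  qed
qed

end


context
  fixes r :: nat
  assumes r3: "r \<ge> 3"
begin

lemma flip2:
  assumes g: "G r a x c d" and lt: "a < dimV r" "x < dimV r" "c < dimV r" "d < dimV r"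
    and dist: "x \<noteq> a" "x \<noteq> c" "x \<noteq> d" "a \<noteq> c" "a \<noteq> d" "c \<noteq> d"
    and xr: "x \<noteq> r" and np: "2*r - x \<noteq> a" "2*r - x \<noteq> c" "2*r - x \<noteq> d"
  shows "G r a (2*r - x) c d"
proof -
  have xl: "2*r - x < dimV r" by (simp add: dimV_def)
  have "G r x a c d" by (rule G_s12[OF g lt])
  hence "G r (2*r - x) a c d" by (rule flip1[OF r3]) (use lt dist xr np in auto)
  thus ?thesis using G_s12 lt xl by blast
qed

lemma flip3:
  assumes g: "G r a b x d" and lt: "a < dimV r" "b < dimV r" "x < dimV r" "d < dimV r"
    and dist: "x \<noteq> a" "x \<noteq> b" "x \<noteq> d" "a \<noteq> b" "a \<noteq> d" "b \<noteq> d"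
    and xr: "x \<noteq> r" and np: "2*r - x \<noteq> a" "2*r - x \<noteq> b" "2*r - x \<noteq> d"
  shows "G r a b (2*r - x) d"
proof -
  have xl: "2*r - x < dimV r" by (simp add: dimV_def)
  have "G r a x b d" by (rule G_s23[OF g lt])
  hence "G r a (2*r - x) b d" by (rule flip2) (use lt dist xr np in auto)
  thus ?thesis using G_s23 lt xl by blast
qed

lemma flip4:
  assumes g: "G r a b c x" and lt: "a < dimV r" "b < dimV r" "c < dimV r" "x < dimV r"
    and dist: "x \<noteq> a" "x \<noteq> b" "x \<noteq> c" "a \<noteq> b" "a \<noteq> c" "b \<noteq> c"
    and xr: "x \<noteq> r" and np: "2*r - x \<noteq> a" "2*r - x \<noteq> b" "2*r - x \<noteq> c"
  shows "G r a b c (2*r - x)"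
proof -
  have xl: "2*r - x < dimV r" by (simp add: dimV_def)
  have "G r a b x c" by (rule G_s34[OF g lt])
  hence "G r a b (2*r - x) c" by (rule flip3) (use lt dist xr np in auto)
  thus ?thesis using G_s34 lt xl by blast
qed

definition lo :: "nat \<Rightarrow> nat" where "lo x = (if x \<le> r then x else 2*r - x)"

lemma lo_props:
  assumes "x < dimV r"
  shows "lo x \<le> r" "lo x < dimV r" "x = lo x \<or> (lo x \<noteq> r \<and> x = 2*r - lo x)" "x < dimV r"
  using assms unfolding lo_def dimV_def by auto

lemma lo_ne:
  assumes "u < dimV r" "v < dimV r" "u \<noteq> v" "u + v \<noteq> 2*r"
  shows "u \<noteq> lo v" "lo u \<noteq> lo v"
  using assms unfolding lo_def dimV_def by auto

lemma clean:
  assumes lt: "a < dimV r" "b < dimV r" "c < dimV r" "d < dimV r"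
    and dist: "a \<noteq> b" "a \<noteq> c" "a \<noteq> d" "b \<noteq> c" "b \<noteq> d" "c \<noteq> d"
    and np: "a + b \<noteq> 2*r" "a + c \<noteq> 2*r" "a + d \<noteq> 2*r" "b + c \<noteq> 2*r" "b + d \<noteq> 2*r" "c + d \<noteq> 2*r"
  shows "G r a b c d"
proof -
  have np': "b + a \<noteq> 2*r" "c + a \<noteq> 2*r" "d + a \<noteq> 2*r" "c + b \<noteq> 2*r" "d + b \<noteq> 2*r" "d + c \<noteq> 2*r"
    using np by auto
  note la = lo_props[OF lt(1)] and lb = lo_props[OF lt(2)] and lc = lo_props[OF lt(3)] and ld = lo_props[OF lt(4)]
  note ne = lo_ne[OF lt(1) lt(2) dist(1) np(1)] lo_ne[OF lt(1) lt(3) dist(2) np(2)] lo_ne[OF lt(1) lt(4) dist(3) np(3)]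
    lo_ne[OF lt(2) lt(3) dist(4) np(4)] lo_ne[OF lt(2) lt(4) dist(5) np(5)] lo_ne[OF lt(3) lt(4) dist(6) np(6)]
    lo_ne[OF lt(2) lt(1) dist(1)[symmetric] np'(1)] lo_ne[OF lt(3) lt(1) dist(2)[symmetric] np'(2)]
    lo_ne[OF lt(4) lt(1) dist(3)[symmetric] np'(3)] lo_ne[OF lt(3) lt(2) dist(4)[symmetric] np'(4)]
    lo_ne[OF lt(4) lt(2) dist(5)[symmetric] np'(5)] lo_ne[OF lt(4) lt(3) dist(6)[symmetric] np'(6)]
  have g0: "G r (lo a) (lo b) (lo c) (lo d)"
    by (rule G_low[OF r3]) (simp_all add: la lb lc ld ne)
  have g1: "G r a (lo b) (lo c) (lo d)"
  proof (cases "a = lo a")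
    case True thus ?thesis using g0 by simp
  next
    case False
    hence h: "lo a \<noteq> r" "2*r - lo a = a" using la by auto
    have "G r (2*r - lo a) (lo b) (lo c) (lo d)"
      by (rule flip1[OF r3 g0]) (simp_all only: h, simp_all add: la lb lc ld ne)
    thus ?thesis using h by simp
  qed
  have g2: "G r a b (lo c) (lo d)"
  proof (cases "b = lo b")
    case True thus ?thesis using g1 by simp
  next
    case False
    hence h: "lo b \<noteq> r" "2*r - lo b = b" using lb by auto
    have "G r a (2*r - lo b) (lo c) (lo d)"
      by (rule flip2[OF g1]) (simp_all only: h, simp_all add: la lb lc ld ne ne[symmetric] dist dist[symmetric] lt)
    thus ?thesis using h by simp
  qed
  have g3: "G r a b c (lo d)"
  proof (cases "c = lo c")
    case True thus ?thesis using g2 by simp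
  next
    case False
    hence h: "lo c \<noteq> r" "2*r - lo c = c" using lc by auto
    have "G r a b (2*r - lo c) (lo d)"
      by (rule flip3[OF g2]) (simp_all only: h, simp_all add: la lb lc ld ne ne[symmetric] dist dist[symmetric] lt)
    thus ?thesis using h by simp
  qed
  show ?thesis
  proof (cases "d = lo d")
    case True thus ?thesis using g3 by simp
  next
    case False
    hence h: "lo d \<noteq> r" "2*r - lo d = d" using ld by auto
    have "G r a b c (2*r - lo d)"
      by (rule flip4[OF g3]) (simp_all only: h, simp_all add: la lb lc ld ne ne[symmetric] dist dist[symmetric] lt)
    thus ?thesis using h by simp
  qed
qed

end


context
  fixes r :: nat
  assumes r3: "r \<ge> 3"
begin

lemma one_pair_nr:
  assumes lt: "a < dimV r" "b < dimV r" "c < dimV r" "d < dimV r"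
    and dist: "a \<noteq> b" "a \<noteq> c" "a \<noteq> d" "b \<noteq> c" "b \<noteq> d" "c \<noteq> d"
    and ab: "a + b = 2*r" and cd: "c + d \<noteq> 2*r" and cr: "c \<noteq> r" and dr: "d \<noteq> r"
  shows "G r a b c d"
proof -
  have rl: "r < dimV r" by simp
  have br: "b \<noteq> r" and ea: "a = 2*r - b" using ab dist by auto
  have f123: "r \<noteq> b" "r \<noteq> c" "r \<noteq> d" using br cr dr by auto
  have f456: "r + b \<noteq> 2*r" "r + c \<noteq> 2*r" "r + d \<noteq> 2*r" using br cr dr by auto
  have f7: "b + c \<noteq> 2*r" using ab dist(2) by linarith
  have f8: "b + d \<noteq> 2*r" using ab dist(3) by linarith
  note f = f123 f456 f7 f8
  have "G r r b c d"
    by (rule clean[OF r3 rl lt(2-4) f(1-3) dist(4-6) f(4-6) f(7-8) cd])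
  hence "G r (2*r - b) b c d" by (rule G_M2[OF r3 _ lt(2-4)]) (use dist cr dr br in auto)
  thus ?thesis using ea by simp
qed

lemma fresh:
  assumes "r \<ge> 3"
  shows "\<exists>w<3. w \<noteq> a \<and> w \<noteq> 2*r - a \<and> w \<noteq> d \<and> w \<noteq> 2*r - d"
proof (rule ccontr)
  assume "\<not> ?thesis"
  hence h: "\<And>w. w < 3 \<Longrightarrow> w = a \<or> w = 2*r - a \<or> w = d \<or> w = 2*r - d" by blast
  from h[of 0] h[of 1] h[of 2] assms show False by linarith
qed

lemma one_pair:
  assumes lt: "a < dimV r" "b < dimV r" "c < dimV r" "d < dimV r"
    and dist: "a \<noteq> b" "a \<noteq> c" "a \<noteq> d" "b \<noteq> c" "b \<noteq> d" "c \<noteq> d"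
    and ab: "a + b = 2*r" and cd: "c + d \<noteq> 2*r"
  shows "G r a b c d"
proof -
  have rl: "r < dimV r" by simp
  have cr: "G r a b r d" if lt': "d < dimV r" and dist': "a \<noteq> d" "b \<noteq> d" "d \<noteq> r" "a \<noteq> r" "b \<noteq> r" for d
  proof -
    obtain w where w: "w < 3" "w \<noteq> a" "w \<noteq> 2*r - a" "w \<noteq> d" "w \<noteq> 2*r - d" using fresh[OF r3] by blast
    have wr: "w \<noteq> r" using w r3 by simp
    have wl: "w < dimV r" using w r3 by (simp add: dimV_def)
    have wb: "w \<noteq> b" using w ab by auto
    have wd: "w + d \<noteq> 2*r" using w by auto
    have g: "G r a b w d" by (rule one_pair_nr[OF lt(1,2) wl lt']) (use dist' w wr wb wd ab in auto)
    have rr: "2*r - r = r" by simp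
    show ?thesis by (rule CM3[OF r3 g lt(1,2) wl lt' rl]) (simp_all add: rr w wb dist' dist'[symmetric] wr[symmetric] dist(1))
  qed
  have ar: "a \<noteq> r" "b \<noteq> r" using ab dist by auto
  consider "c \<noteq> r" "d \<noteq> r" | "c = r" | "d = r" by blast
  thus ?thesis
  proof cases
    case 1 thus ?thesis using one_pair_nr[OF lt dist ab cd] by blast
  next
    case 2 thus ?thesis using cr[OF lt(4)] dist ar by auto
  next
    case 3
    have "G r a b r c" using cr[OF lt(3)] dist ar 3 by auto
    thus ?thesis using G_s34[of r a b r c] lt 3 by auto
  qed
qed

lemma two_pair:
  assumes lt: "a < dimV r" "b < dimV r" "c < dimV r" "d < dimV r"
    and dist: "a \<noteq> b" "a \<noteq> c" "a \<noteq> d" "b \<noteq> c" "b \<noteq> d" "c \<noteq> d"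
    and ab: "a + b = 2*r" and cd: "c + d = 2*r"
  shows "G r a b c d"
proof -
  have rl: "r < dimV r" by simp
  have ar: "a \<noteq> r" "b \<noteq> r" "c \<noteq> r" "d \<noteq> r" using ab cd dist by auto
  have ea: "a = 2*r - b" using ab by simp
  have rb: "r + b \<noteq> 2*r" using ar by linarith
  have g0: "G r c d r b" by (rule one_pair[OF lt(3,4) rl lt(2)]) (simp_all add: dist dist[symmetric] ar ar[symmetric] cd rb)
  have g1: "G r c r d b" by (rule G_s23[OF g0 lt(3,4) rl lt(2)])
  have g2: "G r r c d b" by (rule G_s12[OF g1 lt(3) rl lt(4) lt(2)])
  have g3: "G r r c b d" by (rule G_s34[OF g2 rl lt(3,4) lt(2)])
  have g4: "G r r b c d" by (rule G_s23[OF g3 rl lt(3) lt(2) lt(4)])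
  have "G r (2*r - b) b c d" by (rule G_M2[OF r3 g4 lt(2-4)]) (use dist ar in auto)
  thus ?thesis using ea by simp
qed

lemma pair12:
  assumes lt: "a < dimV r" "b < dimV r" "c < dimV r" "d < dimV r"
    and dist: "a \<noteq> b" "a \<noteq> c" "a \<noteq> d" "b \<noteq> c" "b \<noteq> d" "c \<noteq> d"
    and ab: "a + b = 2*r"
  shows "G r a b c d"
  using one_pair[OF lt dist ab] two_pair[OF lt dist ab] by blast

lemma G_all:
  assumes lt: "a < dimV r" "b < dimV r" "c < dimV r" "d < dimV r"
    and dist: "a \<noteq> b" "a \<noteq> c" "a \<noteq> d" "b \<noteq> c" "b \<noteq> d" "c \<noteq> d"
  shows "G r a b c d"
proof -
  consider "a + b = 2*r" | "a + c = 2*r" | "a + d = 2*r" | "b + c = 2*r" | "b + d = 2*r" | "c + d = 2*r"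
    | "a + b \<noteq> 2*r" "a + c \<noteq> 2*r" "a + d \<noteq> 2*r" "b + c \<noteq> 2*r" "b + d \<noteq> 2*r" "c + d \<noteq> 2*r" by blast
  thus ?thesis
  proof cases
    case 1 thus ?thesis using pair12[OF lt dist] by blast
  next
    case 2
    have "G r a c b d" by (rule pair12[OF lt(1,3,2,4)]) (use dist 2 in auto)
    thus ?thesis using G_s23[OF _ lt(1,3,2,4)] by blast
  next
    case 3
    have "G r a d b c" by (rule pair12[OF lt(1,4,2,3)]) (use dist 3 in auto)
    hence "G r a b d c" using G_s23[OF _ lt(1,4,2,3)] by blast
    thus ?thesis using G_s34[OF _ lt(1,2,4,3)] by blast
  next
    case 4
    have "G r b c a d" by (rule pair12[OF lt(2,3,1,4)]) (use dist 4 in auto)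
    hence "G r b a c d" using G_s23[OF _ lt(2,3,1,4)] by blast
    thus ?thesis using G_s12[OF _ lt(2,1,3,4)] by blast
  next
    case 5
    have "G r b d a c" by (rule pair12[OF lt(2,4,1,3)]) (use dist 5 in auto)
    hence "G r b a d c" using G_s23[OF _ lt(2,4,1,3)] by blast
    hence "G r a b d c" using G_s12[OF _ lt(2,1,4,3)] by blast
    thus ?thesis using G_s34[OF _ lt(1,2,4,3)] by blast
  next
    case 6
    have "G r c d a b" by (rule pair12[OF lt(3,4,1,2)]) (use dist 6 in auto)
    hence "G r c a d b" using G_s23[OF _ lt(3,4,1,2)] by blast
    hence "G r a c d b" using G_s12[OF _ lt(3,1,4,2)] by blast
    hence "G r a c b d" using G_s34[OF _ lt(1,3,4,2)] by blast
    thus ?thesis using G_s23[OF _ lt(1,3,2,4)] by blast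
  next
    case 7 thus ?thesis using clean[OF r3 lt dist] by blast
  qed
qed

end


lemma pf_nondist:
  assumes l: "l \<in> so r" and lt: "a < dimV r" "b < dimV r" "c < dimV r" "d < dimV r"
    and nd: "\<not> (a \<noteq> b \<and> a \<noteq> c \<and> a \<noteq> d \<and> b \<noteq> c \<and> b \<noteq> d \<and> c \<noteq> d)"
  shows "pf r a b c d l = 0"
proof -
  note sk = AA_skew[OF l] and dg = AA_diag0[OF l]
  consider "a = b" | "a = c" | "a = d" | "b = c" | "b = d" | "c = d" using nd by blast
  thus ?thesis
  proof cases
    case 1 thus ?thesis using dg[OF lt(1)] by (simp add: pf_def)
  next
    case 2 thus ?thesis using dg[OF lt(1)] sk[OF lt(2,1)] by (simp add: pf_def)
  next
    case 3 thus ?thesis using dg[OF lt(1)] sk[OF lt(2,1)] sk[OF lt(3,1)] by (simp add: pf_def)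
  next
    case 4 thus ?thesis using dg[OF lt(2)] by (simp add: pf_def)
  next
    case 5 thus ?thesis using dg[OF lt(2)] sk[OF lt(3,2)] by (simp add: pf_def)
  next
    case 6 thus ?thesis using dg[OF lt(3)] by (simp add: pf_def)
  qed
qed

lemma VW2_pf:
  assumes r3: "r \<ge> 3" and l: "l \<in> VW2 r" and lt: "a < dimV r" "b < dimV r" "c < dimV r" "d < dimV r"
  shows "pf r a b c d l = 0"
proof -
  have ls: "l \<in> so r" using l by (simp add: VW2_def)
  show ?thesis
  proof (cases "a \<noteq> b \<and> a \<noteq> c \<and> a \<noteq> d \<and> b \<noteq> c \<and> b \<noteq> d \<and> c \<noteq> d")
    case True
    hence "G r a b c d" using G_all[OF r3 lt] by blast
    then obtain s where s: "s \<in> W2mod r" "\<forall>l\<in>so r. eval2 s l = pf r a b c d l"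
      unfolding G_def Pset_def by auto
    have "eval2 s l = 0" using l s(1) by (simp add: VW2_def)
    thus ?thesis using s(2) ls by simp
  next
    case False thus ?thesis using pf_nondist[OF ls lt] by blast
  qed
qed

lemma decomp:
  assumes l: "l \<in> so r" and z: "\<And>a b c d. a < dimV r \<Longrightarrow> b < dimV r \<Longrightarrow> c < dimV r \<Longrightarrow> d < dimV r \<Longrightarrow> pf r a b c d l = 0"
  shows "\<exists>u w. l = Lam r u w"
proof (cases "\<forall>i<dimV r. \<forall>j<dimV r. AA r l i j = 0")
  case True
  have lc: "l \<in> carrier_mat (dimV r) (dimV r)" using l by simp
  have "l = Lam r (\<lambda>_. 0) (\<lambda>_. 0)"
  proof (rule eq_matI)
    fix i j assume "i < dim_row (Lam r (\<lambda>_. 0) (\<lambda>_. 0))" "j < dim_col (Lam r (\<lambda>_. 0) (\<lambda>_. 0))"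
    hence ij: "i < dimV r" "j < dimV r" by auto
    have "2*r - i < dimV r" by (simp add: dimV_def)
    hence "AA r l (2*r - i) j = 0" using True ij by blast
    moreover have "2*r - (2*r - i) = i" using ij by (simp add: dimV_def)
    ultimately show "l $$ (i,j) = Lam r (\<lambda>_. 0) (\<lambda>_. 0) $$ (i,j)" using ij by (simp add: AA_def)
  qed (use lc in auto)
  thus ?thesis by blast
next
  case False
  then obtain a b where ab: "a < dimV r" "b < dimV r" "AA r l a b \<noteq> 0" by blast
  have lc: "l \<in> carrier_mat (dimV r) (dimV r)" using l by simp
  define u where "u = (\<lambda>i. AA r l a (2*r - i) / AA r l a b)"
  define w where "w = (\<lambda>i. AA r l b (2*r - i))"
  have "l = Lam r u w"
  proof (rule eq_matI)
    fix i j assume "i < dim_row (Lam r u w)" "j < dim_col (Lam r u w)"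
    hence ij: "i < dimV r" "j < dimV r" by auto
    have i': "2*r - i < dimV r" by (simp add: dimV_def)
    have e: "2*r - (2*r - j) = j" "2*r - (2*r - i) = i" "r*2 - (r*2 - j) = j" "r*2 - (r*2 - i) = i" using ij by (auto simp: dimV_def)
    have p: "pf r a b (2*r - i) j l = 0" by (rule z[OF ab(1,2) i' ij(2)])
    have "l $$ (i,j) = AA r l (2*r - i) j" by (simp add: AA_def e)
    also have "\<dots> = (AA r l a (2*r - i) * AA r l b j - AA r l a j * AA r l b (2*r - i)) / AA r l a b"
      using p ab(3) by (simp add: pf_def field_simps)
    also have "\<dots> = Lam r u w $$ (i,j)" using ij ab(3) by (simp add: u_def w_def e field_simps)
    finally show "l $$ (i,j) = Lam r u w $$ (i,j)" .
  qed (use lc in auto)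
  thus ?thesis by blast
qed


definition hv :: "nat \<Rightarrow> (nat \<Rightarrow> complex) \<Rightarrow> nat \<Rightarrow> complex" where
  "hv r c p = (if p < r then c (p + 1) else if p = r then 0 else - c (2 * r + 1 - p))"

lemma hvec_carrier[simp]: "hvec r c \<in> carrier_mat (dimV r) (dimV r)"
  by (simp add: hvec_def)
lemma hvec_dim[simp]: "dim_row (hvec r c) = dimV r" "dim_col (hvec r c) = dimV r"
  by (simp_all add: hvec_def)
lemma hvec_idx: "p < dimV r \<Longrightarrow> q < dimV r \<Longrightarrow> hvec r c $$ (p,q) = (if p = q then hv r c p else 0)"
  by (simp add: hvec_def hv_def)

lemma hv_rev:
  assumes p: "p < dimV r" shows "hv r c (2*r - p) = - hv r c p"
proof -
  consider "p < r" | "p = r" | "r < p" by linarith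
  thus ?thesis
  proof cases
    case 1
    have "\<not> 2*r - p < r" "2*r - p \<noteq> r" "2*r + 1 - (2*r - p) = p + 1" using 1 by linarith+
    thus ?thesis using 1 by (simp add: hv_def)
  next
    case 2 thus ?thesis by (simp add: hv_def)
  next
    case 3
    have "2*r - p < r" "2*r - p + 1 = 2*r + 1 - p" "\<not> p < r" "p \<noteq> r" using 3 p unfolding dimV_def by linarith+
    thus ?thesis by (simp add: hv_def)
  qed
qed

lemma hvec_so: "hvec r c \<in> so r"
  unfolding so_iff
proof (intro conjI allI impI)
  fix i j assume ij: "i < dimV r" "j < dimV r"
  have i': "2*r - i < dimV r" "2*r - j < dimV r" by (auto simp: dimV_def)
  have e: "(2*r - i = j) = (2*r - j = i)" using ij by (auto simp: dimV_def)
  show "hvec r c $$ (2*r-i, j) + hvec r c $$ (2*r-j, i) = 0"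
    using ij i' hv_rev[OF ij(1), of c] hv_rev[OF ij(2), of c]
    by (auto simp: hvec_idx e)
qed simp

lemma hv_eq:
  assumes h: "\<And>j. j \<in> {1..r} \<Longrightarrow> c j = d j" and p: "p < dimV r"
  shows "hv r c p = hv r d p"
proof -
  consider "p < r" | "p = r" | "r < p" by linarith
  thus ?thesis
  proof cases
    case 1 thus ?thesis using h[of "p+1"] by (simp add: hv_def)
  next
    case 2 thus ?thesis by (simp add: hv_def)
  next
    case 3
    have "2*r + 1 - p \<in> {1..r}" using 3 p unfolding dimV_def by auto
    thus ?thesis using h 3 by (simp add: hv_def)
  qed
qed

lemma hvec_eq:
  assumes h: "\<And>j. j \<in> {1..r} \<Longrightarrow> c j = d j"
  shows "hvec r c = hvec r d"
proof (rule eq_matI)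
  fix i j assume "i < dim_row (hvec r d)" "j < dim_col (hvec r d)"
  hence ij: "i < dimV r" "j < dimV r" by auto
  show "hvec r c $$ (i, j) = hvec r d $$ (i, j)"
  proof -
    have "hv r c i = hv r d i" by (rule hv_eq) (use h ij in auto)
    thus ?thesis using ij by (cases "i = j") (simp_all add: hvec_idx)
  qed
qed auto

lemma hvec_smult: "hvec r (\<lambda>j. k * e j) = k \<cdot>\<^sub>m hvec r e"
  unfolding hvec_def by (rule eq_matI) auto

lemma pf_Lam: "a < dimV r \<Longrightarrow> b < dimV r \<Longrightarrow> c < dimV r \<Longrightarrow> d < dimV r \<Longrightarrow> pf r a b c d (Lam r u w) = 0"
proof -
  assume lt: "a < dimV r" "b < dimV r" "c < dimV r" "d < dimV r"
  have "\<And>x. x < dimV r \<Longrightarrow> 2*r - x < dimV r" by (simp add: dimV_def)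
  with lt show ?thesis by (simp add: pf_def AA_def algebra_simps)
qed

lemma diag_lemma:
  assumes z: "\<And>a b c d. a < dimV r \<Longrightarrow> b < dimV r \<Longrightarrow> c < dimV r \<Longrightarrow> d < dimV r \<Longrightarrow> pf r a b c d (hvec r c') = 0"
    and r1: "r \<ge> 1"
  shows "hvec r c' \<in> (\<Union>i \<in> {1..r}. cline (hvec r (eps i)))"
proof -
  have prod0: "c' i * c' j = 0" if ij: "i \<in> {1..r}" "j \<in> {1..r}" "i \<noteq> j" for i j
  proof -
    let ?a = "i - 1" and ?b = "j - 1"
    have lt: "?a < dimV r" "?b < dimV r" "2*r - ?a < dimV r" "2*r - ?b < dimV r" using ij by (auto simp: dimV_def)
    have e1: "2*r - (2*r - ?a) = ?a" "2*r - (2*r - ?b) = ?b" using ij by auto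
    have p: "pf r ?a ?b (2*r - ?a) (2*r - ?b) (hvec r c') = 0" by (rule z[OF lt])
    have A1: "AA r (hvec r c') ?a ?b = 0" using ij lt by (auto simp: AA_def hvec_idx)
    have A2: "AA r (hvec r c') ?a (2*r - ?a) = - c' i" using ij lt by (auto simp: AA_def hvec_idx hv_def)
    have A3: "AA r (hvec r c') ?b (2*r - ?b) = - c' j" using ij lt by (auto simp: AA_def hvec_idx hv_def)
    have A4: "AA r (hvec r c') ?a (2*r - ?b) = 0" using ij lt by (auto simp: AA_def hvec_idx)
    show ?thesis using p A1 A2 A3 A4 by (simp add: pf_def)
  qed
  show ?thesis
  proof (cases "\<forall>i\<in>{1..r}. c' i = 0")
    case True
    have "hvec r c' = hvec r (\<lambda>j. 0 * eps 1 j)" by (rule hvec_eq) (use True in auto)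
    also have "\<dots> = 0 \<cdot>\<^sub>m hvec r (eps 1)" by (rule hvec_smult)
    finally show ?thesis using r1 unfolding cline_def by auto
  next
    case False
    then obtain i where i: "i \<in> {1..r}" "c' i \<noteq> 0" by blast
    have "hvec r c' = hvec r (\<lambda>j. c' i * eps i j)"
    proof (rule hvec_eq)
      fix j assume j: "j \<in> {1..r}"
      show "c' j = c' i * eps i j"
      proof (cases "j = i")
        case True thus ?thesis by (simp add: eps_def)
      next
        case False thus ?thesis using prod0[OF i(1) j] i(2) by (simp add: eps_def)
      qed
    qed
    also have "\<dots> = c' i \<cdot>\<^sub>m hvec r (eps i)" by (rule hvec_smult)
    finally show ?thesis using i unfolding cline_def by auto
  qed
qed

lemma hvec_Lam:
  assumes i: "i \<in> {1..r}"
  shows "k \<cdot>\<^sub>m hvec r (eps i) = Lam r (\<lambda>m. k * of_bool (m = i - 1)) (\<lambda>m. of_bool (m = 2*r + 1 - i))"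
proof -
  define a where "a = i - 1"
  define b where "b = 2*r + 1 - i"
  have ab: "a < r" "r < b" "b < dimV r" "a \<noteq> b" using i unfolding a_def b_def dimV_def by auto
  have e1: "\<And>q. q < dimV r \<Longrightarrow> (2*r - q = b) = (q = a)" "\<And>q. q < dimV r \<Longrightarrow> (2*r - q = a) = (q = b)"
    using i unfolding a_def b_def dimV_def by auto
  have h: "\<And>p. p < dimV r \<Longrightarrow> hv r (eps i) p = of_bool (p = a) - of_bool (p = b)"
  proof -
    fix p assume p: "p < dimV r"
    consider "p < r" | "p = r" | "r < p" by linarith
    thus "hv r (eps i) p = of_bool (p = a) - of_bool (p = b)"
    proof cases
      case 1 thus ?thesis using ab i unfolding a_def hv_def eps_def by auto
    next
      case 2 thus ?thesis using ab unfolding hv_def by auto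
    next
      case 3
      have "(2 * r + 1 - p = i) = (p = b)" using 3 p i unfolding b_def dimV_def by auto
      thus ?thesis using 3 ab unfolding hv_def eps_def by auto
    qed
  qed
  show ?thesis unfolding a_def[symmetric] b_def[symmetric]
  proof (rule eq_matI)
    fix p q assume "p < dim_row (Lam r (\<lambda>m. k * of_bool (m = a)) (\<lambda>m. of_bool (m = b)))"
      "q < dim_col (Lam r (\<lambda>m. k * of_bool (m = a)) (\<lambda>m. of_bool (m = b)))"
    hence pq: "p < dimV r" "q < dimV r" by auto
    show "(k \<cdot>\<^sub>m hvec r (eps i)) $$ (p, q) = Lam r (\<lambda>m. k * of_bool (m = a)) (\<lambda>m. of_bool (m = b)) $$ (p, q)"
      using pq ab by (cases "p = q") (auto simp: hvec_idx h e1)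
  qed auto
qed


definition Bv :: "nat \<Rightarrow> (nat \<Rightarrow> complex) \<Rightarrow> (nat \<Rightarrow> complex) \<Rightarrow> complex" where
  "Bv r x y = (\<Sum>k<dimV r. x k * y (2*r - k))"

lemma Bv_sym: "Bv r x y = Bv r y x"
proof -
  have "Bv r x y = (\<Sum>k<dimV r. x (2*r - (2*r - k)) * y (2*r - k))"
    unfolding Bv_def by (intro sum.cong) (auto simp: dimV_def)
  also have "\<dots> = (\<Sum>k<dimV r. x (2*r - k) * y k)"
    by (rule sum_rev[where f="\<lambda>k. x (2*r - k) * y k"])
  finally show ?thesis unfolding Bv_def by (simp add: mult.commute)
qed

lemma Bv_cong: "(\<And>k. k < dimV r \<Longrightarrow> x k = x' k) \<Longrightarrow> (\<And>k. k < dimV r \<Longrightarrow> y k = y' k) \<Longrightarrow> Bv r x y = Bv r x' y'"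
  unfolding Bv_def by (intro sum.cong) (auto simp: dimV_def)

lemma Bv_lin1: "Bv r (\<lambda>i. a * x i + b * y i) z = a * Bv r x z + b * Bv r y z"
  unfolding Bv_def by (simp add: sum.distrib sum_distrib_left algebra_simps)

lemma Bv_diff1: "Bv r (\<lambda>i. x i - b * y i) z = Bv r x z - b * Bv r y z"
  unfolding Bv_def by (simp add: sum_subtractf sum_distrib_left algebra_simps)

lemma Bv_lin2: "Bv r z (\<lambda>i. a * x i + b * y i) = a * Bv r z x + b * Bv r z y"
  using Bv_lin1[of r a x b y z] Bv_sym[of r z] by (metis Bv_sym)

lemma Bv_diff2: "Bv r z (\<lambda>i. x i - b * y i) = Bv r z x - b * Bv r z y"
  using Bv_diff1[of r x b y z] by (metis Bv_sym)

lemma Bv_unit: "i < dimV r \<Longrightarrow> Bv r (\<lambda>k. of_bool (k = i)) y = y (2*r - i)"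
  unfolding Bv_def by (simp add: sum.delta)

lemma mv_unit: "j < dimV r \<Longrightarrow> mv r g (\<lambda>k. of_bool (k = j)) i = g $$ (i, j)"
  unfolding mv_def by (simp add: sum.delta)

lemma mv_lin: "mv r g (\<lambda>k. a * x k + b * y k) i = a * mv r g x i + b * mv r g y i"
  unfolding mv_def by (simp add: sum.distrib sum_distrib_left algebra_simps)

lemma mv_mult:
  assumes "g \<in> carrier_mat (dimV r) (dimV r)" "h \<in> carrier_mat (dimV r) (dimV r)" "i < dimV r"
  shows "mv r (g * h) x i = mv r g (mv r h x) i"
proof -
  have "mv r (g * h) x i = (\<Sum>k<dimV r. (\<Sum>m<dimV r. g $$ (i,m) * h $$ (m,k)) * x k)"
  proof -
    have e: "\<And>k. k < dimV r \<Longrightarrow> (g*h)$$(i,k) = (\<Sum>m<dimV r. g$$(i,m) * h$$(m,k))"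
      using mult_entry[OF assms(1,2) assms(3)] by blast
    show ?thesis unfolding mv_def by (intro sum.cong refl) (auto simp del: index_mult_mat simp: e)
  qed
  also have "\<dots> = (\<Sum>k<dimV r. \<Sum>m<dimV r. g $$ (i,m) * (h $$ (m,k) * x k))"
    by (simp add: sum_distrib_right mult.assoc)
  also have "\<dots> = (\<Sum>m<dimV r. \<Sum>k<dimV r. g $$ (i,m) * (h $$ (m,k) * x k))"
    by (rule sum.swap)
  also have "\<dots> = (\<Sum>m<dimV r. g $$ (i,m) * (\<Sum>k<dimV r. h $$ (m,k) * x k))"
    by (simp add: sum_distrib_left)
  finally show ?thesis by (simp add: mv_def)
qed

definition isoP :: "nat \<Rightarrow> complex mat \<Rightarrow> bool" where
  "isoP r g \<longleftrightarrow> g \<in> carrier_mat (dimV r) (dimV r) \<and>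
     (\<forall>i<dimV r. \<forall>j<dimV r. Bv r (\<lambda>k. g $$ (k,i)) (\<lambda>k. g $$ (k,j)) = of_bool (i + j = 2*r))"

lemma iso_pres:
  assumes g: "isoP r g"
  shows "Bv r (mv r g x) (mv r g y) = Bv r x y"
proof -
  let ?n = "dimV r"
  have gi: "\<And>k l. k < ?n \<Longrightarrow> l < ?n \<Longrightarrow> (\<Sum>i<?n. g $$ (i,k) * g $$ (2*r - i, l)) = of_bool (k + l = 2*r)"
    using g unfolding isoP_def Bv_def by blast
  have "Bv r (mv r g x) (mv r g y) = (\<Sum>i<?n. \<Sum>k<?n. \<Sum>l<?n. x k * y l * (g $$ (i,k) * g $$ (2*r - i, l)))"
    unfolding Bv_def mv_def by (simp add: sum_product algebra_simps)
  also have "\<dots> = (\<Sum>k<?n. \<Sum>i<?n. \<Sum>l<?n. x k * y l * (g $$ (i,k) * g $$ (2*r - i, l)))"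
    by (rule sum.swap)
  also have "\<dots> = (\<Sum>k<?n. \<Sum>l<?n. \<Sum>i<?n. x k * y l * (g $$ (i,k) * g $$ (2*r - i, l)))"
    by (rule sum.cong[OF refl], rule sum.swap)
  also have "\<dots> = (\<Sum>k<?n. \<Sum>l<?n. x k * y l * of_bool (k + l = 2*r))"
    by (intro sum.cong refl) (simp add: sum_distrib_left[symmetric] gi)
  also have "\<dots> = (\<Sum>k<?n. x k * y (2*r - k))"
  proof (intro sum.cong refl)
    fix k assume k: "k \<in> {..<?n}"
    have "(\<Sum>l<?n. x k * y l * of_bool (k + l = 2*r)) = (\<Sum>l<?n. if l = 2*r - k then x k * y l else 0)"
      using k by (intro sum.cong) (auto simp: dimV_def)
    also have "\<dots> = x k * y (2*r - k)" by (simp add: sum.delta dimV_def)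
    finally show "(\<Sum>l<?n. x k * y l * of_bool (k + l = 2*r)) = x k * y (2*r - k)" .
  qed
  finally show ?thesis unfolding Bv_def .
qed

lemma pres_iso:
  assumes gc: "g \<in> carrier_mat (dimV r) (dimV r)" and p: "\<And>x y. Bv r (mv r g x) (mv r g y) = Bv r x y"
  shows "isoP r g"
  unfolding isoP_def
proof (intro conjI allI impI gc)
  fix i j assume ij: "i < dimV r" "j < dimV r"
  have "Bv r (\<lambda>k. g $$ (k,i)) (\<lambda>k. g $$ (k,j)) = Bv r (mv r g (\<lambda>k. of_bool (k = i))) (mv r g (\<lambda>k. of_bool (k = j)))"
    using ij by (intro Bv_cong) (simp_all add: mv_unit)
  also have "\<dots> = Bv r (\<lambda>k. of_bool (k = i)) (\<lambda>k. of_bool (k = j))" by (rule p)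
  also have "\<dots> = of_bool (i + j = 2*r)" using ij by (auto simp: Bv_unit dimV_def)
  finally show "Bv r (\<lambda>k. g $$ (k,i)) (\<lambda>k. g $$ (k,j)) = of_bool (i + j = 2*r)" .
qed

lemma iso_mult:
  assumes g: "isoP r g" and h: "isoP r h"
  shows "isoP r (g * h)"
proof (rule pres_iso)
  have gc: "g \<in> carrier_mat (dimV r) (dimV r)" and hc: "h \<in> carrier_mat (dimV r) (dimV r)"
    using g h by (auto simp: isoP_def)
  show "g * h \<in> carrier_mat (dimV r) (dimV r)" using gc hc by simp
  fix x y
  have "Bv r (mv r (g * h) x) (mv r (g * h) y) = Bv r (mv r g (mv r h x)) (mv r g (mv r h y))"
    by (intro Bv_cong) (simp_all add: mv_mult[OF gc hc])
  also have "\<dots> = Bv r x y" using iso_pres[OF g] iso_pres[OF h] by simp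
  finally show "Bv r (mv r (g * h) x) (mv r (g * h) y) = Bv r x y" .
qed

definition Rf :: "nat \<Rightarrow> (nat \<Rightarrow> complex) \<Rightarrow> complex mat" where
  "Rf r v = mat (dimV r) (dimV r) (\<lambda>(i,j). of_bool (i = j) - 2 / Bv r v v * v i * v (2*r - j))"

lemma mv_Rf: "i < dimV r \<Longrightarrow> mv r (Rf r v) x i = x i - 2 / Bv r v v * Bv r x v * v i"
proof -
  assume i: "i < dimV r"
  have "mv r (Rf r v) x i = (\<Sum>k<dimV r. (if k = i then x k else 0) - (2 / Bv r v v * v i) * (x k * v (2*r - k)))"
    unfolding mv_def Rf_def using i by (intro sum.cong refl) (auto simp: algebra_simps)
  also have "\<dots> = x i - (2 / Bv r v v * v i) * Bv r x v"
  proof -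
    define C where "C = 2 / Bv r v v * v i"
    have "(\<Sum>k<dimV r. (if k = i then x k else 0) - C * (x k * v (2*r - k)))
       = (\<Sum>k<dimV r. if k = i then x k else 0) - C * (\<Sum>k<dimV r. x k * v (2*r - k))"
      by (simp only: sum_subtractf sum_distrib_left)
    also have "\<dots> = x i - C * Bv r x v" using i by (simp add: sum.delta Bv_def)
    finally show ?thesis unfolding C_def .
  qed
  finally show ?thesis by (simp add: algebra_simps)
qed

lemma refl_alg: "D \<noteq> 0 \<Longrightarrow> X - (2/D*Y)*Z - (2/D*Z)*(Y - (2/D*Y)*D) = (X::complex)"
  by (simp add: field_simps)

lemma Rf_iso:
  assumes v: "Bv r v v \<noteq> 0"
  shows "isoP r (Rf r v)"
proof (rule pres_iso)
  show "Rf r v \<in> carrier_mat (dimV r) (dimV r)" by (simp add: Rf_def)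
  fix x y
  let ?a = "2 / Bv r v v"
  have "Bv r (mv r (Rf r v) x) (mv r (Rf r v) y) = Bv r (\<lambda>i. x i - (?a * Bv r x v) * v i) (\<lambda>i. y i - (?a * Bv r y v) * v i)"
    by (intro Bv_cong) (simp_all add: mv_Rf)
  also have "\<dots> = Bv r x y - (?a * Bv r y v) * Bv r x v - (?a * Bv r x v) * (Bv r v y - (?a * Bv r y v) * Bv r v v)"
    by (simp only: Bv_diff1 Bv_diff2)
  also have "\<dots> = Bv r x y" unfolding Bv_sym[of r v y] by (rule refl_alg[OF v])
  finally show "Bv r (mv r (Rf r v) x) (mv r (Rf r v) y) = Bv r x y" .
qed


lemma Bv_minus1: "Bv r (\<lambda>i. x i - y i) z = Bv r x z - Bv r y z"
  unfolding Bv_def by (simp add: sum_subtractf algebra_simps)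
lemma Bv_plus1: "Bv r (\<lambda>i. x i + y i) z = Bv r x z + Bv r y z"
  unfolding Bv_def by (simp add: sum.distrib algebra_simps)
lemma Bv_minus2: "Bv r z (\<lambda>i. x i - y i) = Bv r z x - Bv r z y"
  using Bv_minus1[of r x y z] by (metis Bv_sym)
lemma Bv_plus2: "Bv r z (\<lambda>i. x i + y i) = Bv r z x + Bv r z y"
  using Bv_plus1[of r x y z] by (metis Bv_sym)
lemma Bv_neg1: "Bv r (\<lambda>i. - x i) z = - Bv r x z"
  unfolding Bv_def by (simp add: sum_negf)

lemma mv_cong: "(\<And>k. k < dimV r \<Longrightarrow> x k = x' k) \<Longrightarrow> mv r g x i = mv r g x' i"
  unfolding mv_def by (intro sum.cong) auto

lemma G2:
  assumes e: "Bv r a a = Bv r b b" and nz: "Bv r a a \<noteq> 0" and ac: "Bv r a c = 0" and bc: "Bv r b c = 0"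
  shows "\<exists>g. isoP r g \<and> (\<forall>i<dimV r. mv r g a i = b i) \<and> (\<forall>i<dimV r. mv r g c i = c i)"
proof (cases "Bv r (\<lambda>i. a i - b i) (\<lambda>i. a i - b i) = 0")
  case False
  let ?v = "\<lambda>i. a i - b i"
  have ba: "Bv r b a = Bv r a b" by (rule Bv_sym)
  have vv: "Bv r ?v ?v = 2 * (Bv r a a - Bv r a b)"
    using e ba by (simp add: Bv_minus1 Bv_minus2)
  have av: "Bv r a ?v = Bv r a a - Bv r a b" by (simp add: Bv_minus2)
  have cv: "Bv r c ?v = 0" using ac bc by (simp add: Bv_minus2 Bv_sym[of r c])
  have co: "2 / Bv r ?v ?v * Bv r a ?v = 1" using False unfolding vv av by (simp add: field_simps)
  have "isoP r (Rf r ?v)" by (rule Rf_iso[OF False])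
  moreover have "\<forall>i<dimV r. mv r (Rf r ?v) a i = b i"
    using co by (simp add: mv_Rf)
  moreover have "\<forall>i<dimV r. mv r (Rf r ?v) c i = c i"
    using cv by (simp add: mv_Rf)
  ultimately show ?thesis by blast
next
  case True
  let ?v = "\<lambda>i. a i + b i"
  have ba: "Bv r b a = Bv r a b" by (rule Bv_sym)
  have ab: "Bv r a b = Bv r a a" using True e ba by (simp add: Bv_minus1 Bv_minus2)
  have vv: "Bv r ?v ?v = 4 * Bv r a a" using e ba ab by (simp add: Bv_plus1 Bv_plus2)
  have vnz: "Bv r ?v ?v \<noteq> 0" using vv nz by simp
  have av: "Bv r a ?v = 2 * Bv r a a" using ab by (simp add: Bv_plus2)
  have cv: "Bv r c ?v = 0" using ac bc by (simp add: Bv_plus2 Bv_sym[of r c])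
  have bnz: "Bv r b b \<noteq> 0" using e nz by simp
  have cb: "Bv r c b = 0" using bc by (simp add: Bv_sym)
  define g where "g = Rf r b * Rf r ?v"
  have gi: "isoP r g" unfolding g_def by (rule iso_mult[OF Rf_iso[OF bnz] Rf_iso[OF vnz]])
  have rc: "Rf r b \<in> carrier_mat (dimV r) (dimV r)" "Rf r ?v \<in> carrier_mat (dimV r) (dimV r)"
    by (simp_all add: Rf_def)
  have step1: "\<forall>k<dimV r. mv r (Rf r ?v) a k = - b k"
    using nz by (simp add: mv_Rf vv av field_simps)
  have step2: "\<forall>k<dimV r. mv r (Rf r ?v) c k = c k"
    using cv by (simp add: mv_Rf)
  have nb: "Bv r (\<lambda>i. - b i) b = - Bv r b b" by (rule Bv_neg1)
  have "\<forall>i<dimV r. mv r g a i = b i"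
  proof (intro allI impI)
    fix i assume i: "i < dimV r"
    have "mv r g a i = mv r (Rf r b) (mv r (Rf r ?v) a) i" unfolding g_def by (rule mv_mult[OF rc i])
    also have "\<dots> = mv r (Rf r b) (\<lambda>k. - b k) i" by (rule mv_cong) (use step1 in auto)
    also have "\<dots> = b i" using i bnz by (simp add: mv_Rf nb field_simps)
    finally show "mv r g a i = b i" .
  qed
  moreover have "\<forall>i<dimV r. mv r g c i = c i"
  proof (intro allI impI)
    fix i assume i: "i < dimV r"
    have "mv r g c i = mv r (Rf r b) (mv r (Rf r ?v) c) i" unfolding g_def by (rule mv_mult[OF rc i])
    also have "\<dots> = mv r (Rf r b) c i" by (rule mv_cong) (use step2 in auto)
    also have "\<dots> = c i" using i cb by (simp add: mv_Rf)
    finally show "mv r g c i = c i" .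
  qed
  ultimately show ?thesis using gi by blast
qed


lemma Bv_e:
  assumes "r \<ge> 1"
  shows "Bv r (\<lambda>k. of_bool (k = 0)) (\<lambda>k. of_bool (k = 0)) = 0"
    "Bv r (\<lambda>k. of_bool (k = 0)) (\<lambda>k. of_bool (k = 2*r)) = 1"
    "Bv r (\<lambda>k. of_bool (k = 2*r)) (\<lambda>k. of_bool (k = 0)) = 1"
    "Bv r (\<lambda>k. of_bool (k = 2*r)) (\<lambda>k. of_bool (k = 2*r)) = 0"
  using assms by (simp_all add: Bv_unit dimV_def)

lemma conj_exists:
  assumes r1: "r \<ge> 1" and pp: "Bv r p p = 0" and qq: "Bv r q q = 0" and pq: "Bv r p q = 1"
  shows "\<exists>g. isoP r g \<and> (\<forall>i<dimV r. g $$ (i, 0) = p i) \<and> (\<forall>i<dimV r. g $$ (i, 2*r) = q i)"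
proof -
  define e0 :: "nat \<Rightarrow> complex" where "e0 = (\<lambda>k. of_bool (k = 0))"
  define e2 :: "nat \<Rightarrow> complex" where "e2 = (\<lambda>k. of_bool (k = 2*r))"
  note E = Bv_e[OF r1, folded e0_def e2_def]
  define a1 where "a1 = (\<lambda>k. e0 k + e2 k)"
  define a2 where "a2 = (\<lambda>k. e0 k - e2 k)"
  define b1 where "b1 = (\<lambda>k. p k + q k)"
  define b2 where "b2 = (\<lambda>k. p k - q k)"
  have qp: "Bv r q p = 1" using pq by (simp add: Bv_sym)
  have a11: "Bv r a1 a1 = 2" unfolding a1_def by (simp add: Bv_plus1 Bv_plus2 E)
  have b11: "Bv r b1 b1 = 2" unfolding b1_def by (simp add: Bv_plus1 Bv_plus2 pp qq pq qp)
  have a22: "Bv r a2 a2 = -2" unfolding a2_def by (simp add: Bv_minus1 Bv_minus2 E)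
  have b22: "Bv r b2 b2 = -2" unfolding b2_def by (simp add: Bv_minus1 Bv_minus2 pp qq pq qp)
  have a21: "Bv r a2 a1 = 0" unfolding a1_def a2_def by (simp add: Bv_minus1 Bv_plus2 E)
  have b21: "Bv r b2 b1 = 0" unfolding b1_def b2_def by (simp add: Bv_minus1 Bv_plus2 pp qq pq qp)
  obtain g1 where g1: "isoP r g1" "\<forall>i<dimV r. mv r g1 a1 i = b1 i"
    using G2[of r a1 b1 "\<lambda>_. 0"] a11 b11 by (auto simp: Bv_def)
  define a2' where "a2' = mv r g1 a2"
  have a2'2: "Bv r a2' a2' = -2" unfolding a2'_def using iso_pres[OF g1(1)] a22 by simp
  have a2'1: "Bv r a2' b1 = 0"
  proof -
    have "Bv r a2' b1 = Bv r (mv r g1 a2) (mv r g1 a1)" unfolding a2'_def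
      by (rule Bv_cong) (use g1(2) in auto)
    thus ?thesis using iso_pres[OF g1(1)] a21 by simp
  qed
  obtain g2 where g2: "isoP r g2" "\<forall>i<dimV r. mv r g2 a2' i = b2 i" "\<forall>i<dimV r. mv r g2 b1 i = b1 i"
    using G2[of r a2' b2 b1] a2'2 b22 a2'1 b21 by auto
  have c1: "g1 \<in> carrier_mat (dimV r) (dimV r)" and c2: "g2 \<in> carrier_mat (dimV r) (dimV r)"
    using g1 g2 by (auto simp: isoP_def)
  define g where "g = g2 * g1"
  have gi: "isoP r g" unfolding g_def by (rule iso_mult[OF g2(1) g1(1)])
  have l1: "mv r g1 (\<lambda>k. 1/2 * a1 k + 1/2 * a2 k) i = 1/2 * b1 i + 1/2 * a2' i" if "i < dimV r" for i
    unfolding mv_lin using g1(2) that by (simp add: a2'_def)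
  have l2: "mv r g1 (\<lambda>k. 1/2 * a1 k + (-1/2) * a2 k) i = 1/2 * b1 i + (-1/2) * a2' i" if "i < dimV r" for i
    unfolding mv_lin using g1(2) that by (simp add: a2'_def)
  have col0: "g $$ (i, 0) = p i" if i: "i < dimV r" for i
  proof -
    have "g $$ (i, 0) = mv r g e0 i" unfolding e0_def by (rule mv_unit[symmetric]) (simp add: dimV_def)
    also have "e0 = (\<lambda>k. 1/2 * a1 k + 1/2 * a2 k)" unfolding a1_def a2_def by (auto simp: field_simps)
    also have "mv r g (\<lambda>k. 1/2 * a1 k + 1/2 * a2 k) i = mv r g2 (mv r g1 (\<lambda>k. 1/2 * a1 k + 1/2 * a2 k)) i"
      unfolding g_def by (rule mv_mult[OF c2 c1 i])
    also have "\<dots> = mv r g2 (\<lambda>k. 1/2 * b1 k + 1/2 * a2' k) i" by (rule mv_cong) (rule l1)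
    also have "\<dots> = 1/2 * b1 i + 1/2 * b2 i" unfolding mv_lin using g2(2,3) i by simp
    also have "\<dots> = p i" unfolding b1_def b2_def by (simp add: field_simps)
    finally show ?thesis .
  qed
  have col2: "g $$ (i, 2*r) = q i" if i: "i < dimV r" for i
  proof -
    have "g $$ (i, 2*r) = mv r g e2 i" unfolding e2_def by (rule mv_unit[symmetric]) (simp add: dimV_def)
    also have "e2 = (\<lambda>k. 1/2 * a1 k + (-1/2) * a2 k)" unfolding a1_def a2_def by (auto simp: field_simps)
    also have "mv r g (\<lambda>k. 1/2 * a1 k + (-1/2) * a2 k) i = mv r g2 (mv r g1 (\<lambda>k. 1/2 * a1 k + (-1/2) * a2 k)) i"
      unfolding g_def by (rule mv_mult[OF c2 c1 i])
    also have "\<dots> = mv r g2 (\<lambda>k. 1/2 * b1 k + (-1/2) * a2' k) i" by (rule mv_cong) (rule l2)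
    also have "\<dots> = 1/2 * b1 i + (-1/2) * b2 i" unfolding mv_lin using g2(2,3) i by simp
    also have "\<dots> = q i" unfolding b1_def b2_def by (simp add: field_simps)
    finally show ?thesis .
  qed
  show ?thesis using gi col0 col2 by blast
qed


lemma iso_carrier: "isoP r g \<Longrightarrow> g \<in> carrier_mat (dimV r) (dimV r)"
  by (simp add: isoP_def)

lemma tJ_entry:
  assumes gc: "g \<in> carrier_mat (dimV r) (dimV r)" and i: "i < dimV r" and m: "m < dimV r"
  shows "(transpose_mat g * Jform r) $$ (i, m) = g $$ (2*r - m, i)"
proof -
  have "(transpose_mat g * Jform r) $$ (i, m) = (\<Sum>k<dimV r. g $$ (k,i) * (if k + m = 2*r then 1 else 0))"
    using gc i m by (subst mult_entry[of _ "dimV r" "dimV r" _ "dimV r"]) (auto simp: Jform_idx)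
  also have "\<dots> = g $$ (2*r - m, i)" by (rule sum_delta_J[OF m])
  finally show ?thesis .
qed

lemma iso_SO_eq:
  assumes g: "isoP r g"
  shows "transpose_mat g * Jform r * g = Jform r"
proof -
  have gc: "g \<in> carrier_mat (dimV r) (dimV r)" using g by (simp add: isoP_def)
  have tc: "transpose_mat g * Jform r \<in> carrier_mat (dimV r) (dimV r)" using gc by simp
  show ?thesis
  proof (rule eq_matI)
    fix i j assume "i < dim_row (Jform r)" "j < dim_col (Jform r)"
    hence ij: "i < dimV r" "j < dimV r" by auto
    have "(transpose_mat g * Jform r * g) $$ (i,j) = (\<Sum>m<dimV r. g $$ (2*r - m, i) * g $$ (m, j))"
      by (subst mult_entry[OF tc gc ij]) (simp add: tJ_entry[OF gc ij(1)])
    also have "\<dots> = (\<Sum>m<dimV r. g $$ (m, j) * g $$ (2*r - m, i))" by (simp add: mult.commute)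
    also have "\<dots> = Bv r (\<lambda>k. g $$ (k,j)) (\<lambda>k. g $$ (k,i))" by (simp add: Bv_def)
    also have "\<dots> = of_bool (j + i = 2*r)" using g ij by (simp add: isoP_def)
    also have "\<dots> = Jform r $$ (i,j)" using ij by (simp add: Jform_idx)
    finally show "(transpose_mat g * Jform r * g) $$ (i,j) = Jform r $$ (i,j)" .
  qed (use gc in auto)
qed

lemma J_sq: "Jform r * Jform r = 1\<^sub>m (dimV r)"
proof (rule eq_matI)
  fix i j assume "i < dim_row (1\<^sub>m (dimV r))" "j < dim_col (1\<^sub>m (dimV r))"
  hence ij: "i < dimV r" "j < dimV r" by auto
  have "(Jform r * Jform r) $$ (i,j) = (\<Sum>k<dimV r. (if i + k = 2*r then 1 else 0) * Jform r $$ (k,j))"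
    using ij by (subst mult_entry[of _ "dimV r" "dimV r" _ "dimV r"]) (auto simp: Jform_idx)
  also have "\<dots> = Jform r $$ (2*r - i, j)" by (rule sum_delta_J2[OF ij(1)])
  also have "\<dots> = 1\<^sub>m (dimV r) $$ (i,j)" using ij by (auto simp: Jform_idx dimV_def)
  finally show "(Jform r * Jform r) $$ (i,j) = 1\<^sub>m (dimV r) $$ (i,j)" .
qed auto

lemma iso_det: assumes g: "isoP r g" shows "det g * det g = 1"
proof -
  have gc: "g \<in> carrier_mat (dimV r) (dimV r)" using g by (simp add: isoP_def)
  have dJ: "det (Jform r) \<noteq> 0"
    using arg_cong[OF J_sq[of r], of det] det_mult[OF Jform_carrier Jform_carrier] by auto
  have "det (transpose_mat g * Jform r * g) = det (Jform r)" using iso_SO_eq[OF g] by simp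
  moreover have "det (transpose_mat g * Jform r * g) = det g * det (Jform r) * det g"
    using gc by (simp add: det_mult[of _ "dimV r"] det_transpose)
  ultimately have "(det g * det g - 1) * det (Jform r) = 0" by (simp add: algebra_simps)
  thus ?thesis using dJ by simp
qed

lemma iso_neg: assumes g: "isoP r g" shows "isoP r ((-1) \<cdot>\<^sub>m g)"
  unfolding isoP_def
proof (intro conjI allI impI)
  have gc: "g \<in> carrier_mat (dimV r) (dimV r)" using g by (simp add: isoP_def)
  thus "(-1) \<cdot>\<^sub>m g \<in> carrier_mat (dimV r) (dimV r)" by simp
  fix i j assume ij: "i < dimV r" "j < dimV r"
  have "Bv r (\<lambda>k. ((-1) \<cdot>\<^sub>m g) $$ (k,i)) (\<lambda>k. ((-1) \<cdot>\<^sub>m g) $$ (k,j)) = Bv r (\<lambda>k. g $$ (k,i)) (\<lambda>k. g $$ (k,j))"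
    unfolding Bv_def using gc ij by (intro sum.cong refl) (auto simp: dimV_def)
  thus "Bv r (\<lambda>k. ((-1) \<cdot>\<^sub>m g) $$ (k,i)) (\<lambda>k. ((-1) \<cdot>\<^sub>m g) $$ (k,j)) = of_bool (i + j = 2*r)"
    using g ij by (simp add: isoP_def)
qed

lemma Lam_cong: "(\<And>k. k < dimV r \<Longrightarrow> u k = u' k) \<Longrightarrow> (\<And>k. k < dimV r \<Longrightarrow> w k = w' k) \<Longrightarrow> Lam r u w = Lam r u' w'"
  by (rule eq_matI) (auto simp: dimV_def)

lemma Lam_conj:
  assumes g: "isoP r g"
  shows "Lam r (mv r g u) (mv r g w) * g = g * Lam r u w"
proof -
  have gc: "g \<in> carrier_mat (dimV r) (dimV r)" using g by (simp add: isoP_def)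
  show ?thesis
  proof (rule eq_matI)
    fix i j assume "i < dim_row (g * Lam r u w)" "j < dim_col (g * Lam r u w)"
    hence ij: "i < dimV r" "j < dimV r" using gc by auto
    have cj: "\<And>x. Bv r (\<lambda>k. g $$ (k, j)) (mv r g x) = x (2*r - j)"
    proof -
      fix x
      have "Bv r (\<lambda>k. g $$ (k, j)) (mv r g x) = Bv r (mv r g (\<lambda>k. of_bool (k = j))) (mv r g x)"
        using ij by (intro Bv_cong) (simp_all add: mv_unit)
      also have "\<dots> = Bv r (\<lambda>k. of_bool (k = j)) x" by (rule iso_pres[OF g])
      also have "\<dots> = x (2*r - j)" using ij by (simp add: Bv_unit)
      finally show "Bv r (\<lambda>k. g $$ (k, j)) (mv r g x) = x (2*r - j)" .
    qed
    have "(Lam r (mv r g u) (mv r g w) * g) $$ (i,j)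
        = (\<Sum>m<dimV r. (mv r g u i * mv r g w (2*r - m) - mv r g w i * mv r g u (2*r - m)) * g $$ (m,j))"
      using gc ij by (subst mult_entry[of _ "dimV r" "dimV r" _ "dimV r"]) auto
    also have "\<dots> = mv r g u i * Bv r (\<lambda>k. g $$ (k, j)) (mv r g w) - mv r g w i * Bv r (\<lambda>k. g $$ (k, j)) (mv r g u)"
      unfolding Bv_def by (simp add: sum_distrib_left sum_subtractf[symmetric] algebra_simps)
    also have "\<dots> = mv r g u i * w (2*r - j) - mv r g w i * u (2*r - j)" by (simp add: cj)
    also have "\<dots> = (\<Sum>k<dimV r. g $$ (i,k) * (u k * w (2*r - j) - w k * u (2*r - j)))"
    proof -
      have "(\<Sum>k<dimV r. g $$ (i,k) * (u k * w (2*r - j) - w k * u (2*r - j)))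
          = (\<Sum>k<dimV r. (g $$ (i,k) * u k) * w (2*r - j) - (g $$ (i,k) * w k) * u (2*r - j))"
        by (intro sum.cong refl) (simp add: algebra_simps)
      also have "\<dots> = (\<Sum>k<dimV r. g $$ (i,k) * u k) * w (2*r - j) - (\<Sum>k<dimV r. g $$ (i,k) * w k) * u (2*r - j)"
        by (simp add: sum_subtractf sum_distrib_right)
      finally show ?thesis unfolding mv_def by simp
    qed
    also have "\<dots> = (g * Lam r u w) $$ (i,j)"
      using gc ij by (subst mult_entry[of _ "dimV r" "dimV r" _ "dimV r"]) auto
    finally show "(Lam r (mv r g u) (mv r g w) * g) $$ (i,j) = (g * Lam r u w) $$ (i,j)" .
  qed (use gc in auto)
qed


lemma tJg_entry:
  assumes gc: "g \<in> carrier_mat (dimV r) (dimV r)" and ij: "i < dimV r" "j < dimV r"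
  shows "(transpose_mat g * Jform r * g) $$ (i,j) = Bv r (\<lambda>k. g $$ (k,j)) (\<lambda>k. g $$ (k,i))"
proof -
  have tc: "transpose_mat g * Jform r \<in> carrier_mat (dimV r) (dimV r)" using gc by simp
  have "(transpose_mat g * Jform r * g) $$ (i,j) = (\<Sum>m<dimV r. g $$ (2*r - m, i) * g $$ (m, j))"
    by (subst mult_entry[OF tc gc ij]) (simp add: tJ_entry[OF gc ij(1)])
  also have "\<dots> = (\<Sum>m<dimV r. g $$ (m, j) * g $$ (2*r - m, i))" by (simp add: mult.commute)
  finally show ?thesis by (simp add: Bv_def)
qed

lemma SO_iso:
  assumes g: "g \<in> SOgrp r"
  shows "isoP r g"
  unfolding isoP_def
proof (intro conjI allI impI)
  show gc: "g \<in> carrier_mat (dimV r) (dimV r)" using g by (simp add: SOgrp_def)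
  fix i j assume ij: "i < dimV r" "j < dimV r"
  have e: "transpose_mat g * Jform r * g = Jform r" using g by (simp add: SOgrp_def)
  have "Bv r (\<lambda>k. g $$ (k,i)) (\<lambda>k. g $$ (k,j)) = (transpose_mat g * Jform r * g) $$ (j,i)"
    using tJg_entry[OF gc ij(2) ij(1)] by simp
  also have "\<dots> = of_bool (i + j = 2*r)" unfolding e using ij by (simp add: Jform_idx add.commute)
  finally show "Bv r (\<lambda>k. g $$ (k,i)) (\<lambda>k. g $$ (k,j)) = of_bool (i + j = 2*r)" .
qed

lemma hvec_e1: "r \<ge> 1 \<Longrightarrow> k \<cdot>\<^sub>m hvec r (eps 1) = Lam r (\<lambda>m. k * of_bool (m = 0)) (\<lambda>m. of_bool (m = 2*r))"
  using hvec_Lam[of 1 r k] by simp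

lemma orbit_lemma:
  assumes r1: "r \<ge> 1" and pp: "Bv r p p = 0" and qq: "Bv r q q = 0" and pq: "Bv r p q = 1"
  shows "k \<cdot>\<^sub>m Lam r p q \<in> orbit r (cline (hvec r (eps 1)))"
proof -
  obtain g where g: "isoP r g" "\<forall>i<dimV r. g $$ (i, 0) = p i" "\<forall>i<dimV r. g $$ (i, 2*r) = q i"
    using conj_exists[OF r1 pp qq pq] by blast
  have gc: "g \<in> carrier_mat (dimV r) (dimV r)" using g(1) by (simp add: isoP_def)
  have he: "hvec r (eps 1) = Lam r (\<lambda>m. of_bool (m = 0)) (\<lambda>m. of_bool (m = 2*r))"
    using hvec_e1[OF r1, of 1] hvec_smult[of r 1 "eps 1"] by simp
  have pe: "Lam r (mv r g (\<lambda>m. of_bool (m = 0))) (mv r g (\<lambda>m. of_bool (m = 2*r))) = Lam r p q"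
    by (rule Lam_cong) (simp_all add: mv_unit g(2,3) dimV_def)
  have c1: "Lam r p q * g = g * hvec r (eps 1)"
    using Lam_conj[OF g(1), of "\<lambda>m. of_bool (m = 0)" "\<lambda>m. of_bool (m = 2*r)"] unfolding pe he .
  let ?x = "k \<cdot>\<^sub>m hvec r (eps 1)" and ?mu = "k \<cdot>\<^sub>m Lam r p q"
  have eq: "g * ?x = ?mu * g"
    using c1 gc by (simp add: mult_smult_distrib[OF gc hvec_carrier] mult_smult_assoc_mat[OF Lam_carrier gc])
  have xin: "?x \<in> cline (hvec r (eps 1))" unfolding cline_def by blast
  have mc: "?mu \<in> carrier_mat (dimV r) (dimV r)" by simp
  have d: "det g * det g = 1" by (rule iso_det[OF g(1)])
  hence "det g = 1 \<or> det g = -1" using square_eq_1_iff[of "det g"] by (simp add: power2_eq_square)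
  thus ?thesis
  proof
    assume d1: "det g = 1"
    have "g \<in> SOgrp r" unfolding SOgrp_def using gc iso_SO_eq[OF g(1)] d1 by simp
    thus ?thesis unfolding orbit_def using mc eq xin by blast
  next
    assume d1: "det g = -1"
    let ?g = "(-1) \<cdot>\<^sub>m g"
    have gc': "?g \<in> carrier_mat (dimV r) (dimV r)" using gc by simp
    have "det ?g = (-1) ^ dimV r * det g" using gc by simp
    also have "\<dots> = 1" using d1 by (simp add: dimV_def)
    finally have "det ?g = 1" .
    hence "?g \<in> SOgrp r" unfolding SOgrp_def using gc' iso_SO_eq[OF iso_neg[OF g(1)]] by simp
    moreover have "?g * ?x = ?mu * ?g"
    proof -
      have "?g * ?x = (-1) \<cdot>\<^sub>m (g * ?x)" by (rule mult_smult_assoc_mat[OF gc smult_carrier_mat[OF hvec_carrier]])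
      also have "\<dots> = (-1) \<cdot>\<^sub>m (?mu * g)" using eq by simp
      also have "\<dots> = ?mu * ?g" by (rule mult_smult_distrib[OF mc gc, symmetric])
      finally show ?thesis .
    qed
    ultimately show ?thesis unfolding orbit_def using mc xin by blast
  qed
qed

lemma orbit_rev:
  assumes r1: "r \<ge> 1" and mc: "mu \<in> carrier_mat (dimV r) (dimV r)" and g: "g \<in> SOgrp r"
    and eq: "g * (k \<cdot>\<^sub>m hvec r (eps 1)) = mu * g"
  shows "mu = Lam r (mv r g (\<lambda>m. k * of_bool (m = 0))) (mv r g (\<lambda>m. of_bool (m = 2*r)))"
proof -
  have gi: "isoP r g" by (rule SO_iso[OF g])
  have gc: "g \<in> carrier_mat (dimV r) (dimV r)" using g by (simp add: SOgrp_def)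
  let ?L = "Lam r (mv r g (\<lambda>m. k * of_bool (m = 0))) (mv r g (\<lambda>m. of_bool (m = 2*r)))"
  have c1: "?L * g = mu * g"
    using Lam_conj[OF gi, of "\<lambda>m. k * of_bool (m = 0)" "\<lambda>m. of_bool (m = 2*r)"] eq unfolding hvec_e1[OF r1, of k] by simp
  define H where "H = Jform r * transpose_mat g * Jform r"
  have hc: "H \<in> carrier_mat (dimV r) (dimV r)" unfolding H_def using gc
    by (intro mult_carrier_mat[of _ _ "dimV r"] Jform_carrier) auto
  have "H * g = Jform r * (transpose_mat g * Jform r * g)"
    unfolding H_def using gc by (simp add: assoc_mult_mat[of _ "dimV r" "dimV r" _ "dimV r" _ "dimV r"])
  also have "\<dots> = 1\<^sub>m (dimV r)" using iso_SO_eq[OF gi] J_sq by simp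
  finally have hg: "H * g = 1\<^sub>m (dimV r)" .
  have gh: "g * H = 1\<^sub>m (dimV r)" by (rule mat_mult_left_right_inverse[OF hc gc hg])
  have "mu = mu * (g * H)" using mc gh by simp
  also have "\<dots> = (mu * g) * H" using mc gc hc by (simp add: assoc_mult_mat[of _ "dimV r" "dimV r" _ "dimV r" _ "dimV r"])
  also have "\<dots> = (?L * g) * H" using c1 by simp
  also have "\<dots> = ?L * (g * H)" using gc hc by (simp add: assoc_mult_mat[of _ "dimV r" "dimV r" _ "dimV r" _ "dimV r"])
  also have "\<dots> = ?L" using gh by simp
  finally show ?thesis .
qed


lemma Lam_mult_entry:
  assumes N: "N \<in> carrier_mat (dimV r) (dimV r)" and ij: "i < dimV r" "j < dimV r"
  shows "(Lam r u w * N) $$ (i,j) = u i * (\<Sum>k<dimV r. w (2*r-k) * N $$ (k,j)) - w i * (\<Sum>k<dimV r. u (2*r-k) * N $$ (k,j))"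
proof -
  have "(Lam r u w * N) $$ (i,j) = (\<Sum>k<dimV r. (u i * w (2*r-k) - w i * u (2*r-k)) * N $$ (k,j))"
    using N ij by (subst mult_entry[of _ "dimV r" "dimV r" _ "dimV r"]) auto
  also have "\<dots> = (\<Sum>k<dimV r. u i * (w (2*r-k) * N $$ (k,j)) - w i * (u (2*r-k) * N $$ (k,j)))"
    by (intro sum.cong refl) (simp add: algebra_simps)
  also have "\<dots> = u i * (\<Sum>k<dimV r. w (2*r-k) * N $$ (k,j)) - w i * (\<Sum>k<dimV r. u (2*r-k) * N $$ (k,j))"
    by (simp add: sum_subtractf sum_distrib_left)
  finally show ?thesis .
qed

lemma col_sum: "(\<Sum>k<dimV r. x (2*r-k) * (u k * A - w k * B)) = Bv r u x * A - Bv r w x * B"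
proof -
  have "(\<Sum>k<dimV r. x (2*r-k) * (u k * A - w k * B)) = (\<Sum>k<dimV r. (u k * x (2*r-k)) * A - (w k * x (2*r-k)) * B)"
    by (intro sum.cong refl) (simp add: algebra_simps)
  also have "\<dots> = Bv r u x * A - Bv r w x * B" by (simp add: sum_subtractf sum_distrib_right Bv_def)
  finally show ?thesis .
qed

lemma Lam_cube:
  "Lam r u w * Lam r u w * Lam r u w = (Bv r u w * Bv r u w - Bv r u u * Bv r w w) \<cdot>\<^sub>m Lam r u w"
proof -
  let ?a = "Bv r u u" and ?b = "Bv r u w" and ?c = "Bv r w w"
  have wu: "Bv r w u = ?b" by (rule Bv_sym)
  define P where "P = (\<lambda>j. ?b * w (2*r-j) - ?c * u (2*r-j))"
  define Q where "Q = (\<lambda>j. ?a * w (2*r-j) - ?b * u (2*r-j))"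
  have L2: "Lam r u w * Lam r u w = mat (dimV r) (dimV r) (\<lambda>(k,j). u k * P j - w k * Q j)"
  proof (rule eq_matI)
    fix i j assume "i < dim_row (mat (dimV r) (dimV r) (\<lambda>(k,j). u k * P j - w k * Q j))"
      "j < dim_col (mat (dimV r) (dimV r) (\<lambda>(k,j). u k * P j - w k * Q j))"
    hence ij: "i < dimV r" "j < dimV r" by auto
    have e: "\<And>x. (\<Sum>k<dimV r. x (2*r-k) * Lam r u w $$ (k,j)) = Bv r u x * w (2*r-j) - Bv r w x * u (2*r-j)"
    proof -
      fix x
      have "(\<Sum>k<dimV r. x (2*r-k) * Lam r u w $$ (k,j)) = (\<Sum>k<dimV r. x (2*r-k) * (u k * w (2*r-j) - w k * u (2*r-j)))"
        using ij by (intro sum.cong refl) simp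
      thus "(\<Sum>k<dimV r. x (2*r-k) * Lam r u w $$ (k,j)) = Bv r u x * w (2*r-j) - Bv r w x * u (2*r-j)"
        by (simp only: col_sum)
    qed
    show "(Lam r u w * Lam r u w) $$ (i,j) = mat (dimV r) (dimV r) (\<lambda>(k,j). u k * P j - w k * Q j) $$ (i,j)"
      unfolding Lam_mult_entry[OF Lam_carrier ij] e using ij by (simp add: P_def Q_def wu)
  qed auto
  have L2c: "Lam r u w * Lam r u w \<in> carrier_mat (dimV r) (dimV r)" by (rule mult_carrier_mat[OF Lam_carrier Lam_carrier])
  show ?thesis
  proof (rule eq_matI)
    fix i j assume "i < dim_row ((?b * ?b - ?a * ?c) \<cdot>\<^sub>m Lam r u w)" "j < dim_col ((?b * ?b - ?a * ?c) \<cdot>\<^sub>m Lam r u w)"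
    hence ij: "i < dimV r" "j < dimV r" by auto
    have "Lam r u w * Lam r u w * Lam r u w = Lam r u w * (Lam r u w * Lam r u w)"
      by (rule assoc_mult_mat[OF Lam_carrier Lam_carrier Lam_carrier])
    hence "(Lam r u w * Lam r u w * Lam r u w) $$ (i,j) = (Lam r u w * (Lam r u w * Lam r u w)) $$ (i,j)" by simp
    also have "\<dots> = u i * (\<Sum>k<dimV r. w (2*r-k) * (Lam r u w * Lam r u w) $$ (k,j)) - w i * (\<Sum>k<dimV r. u (2*r-k) * (Lam r u w * Lam r u w) $$ (k,j))"
      by (rule Lam_mult_entry[OF L2c ij])
    also have "\<dots> = u i * (\<Sum>k<dimV r. w (2*r-k) * (u k * P j - w k * Q j)) - w i * (\<Sum>k<dimV r. u (2*r-k) * (u k * P j - w k * Q j))"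
    proof -
      have "\<And>k. k < dimV r \<Longrightarrow> (Lam r u w * Lam r u w) $$ (k,j) = u k * P j - w k * Q j"
        unfolding L2 using ij by simp
      thus ?thesis by (simp del: index_mult_mat)
    qed
    also have "\<dots> = u i * (Bv r u w * P j - Bv r w w * Q j) - w i * (Bv r u u * P j - Bv r w u * Q j)"
      by (simp only: col_sum)
    also have "\<dots> = ((?b * ?b - ?a * ?c) \<cdot>\<^sub>m Lam r u w) $$ (i,j)"
      using ij by (simp add: P_def Q_def wu algebra_simps)
    finally show "(Lam r u w * Lam r u w * Lam r u w) $$ (i,j) = ((?b * ?b - ?a * ?c) \<cdot>\<^sub>m Lam r u w) $$ (i,j)" .
  qed auto
qed

lemma diag_mult:
  assumes D: "diagonal_mat D" "D \<in> carrier_mat nn nn" and ij: "i < nn" "j < nn"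
  shows "(D * D) $$ (i,j) = D $$ (i,i) * D $$ (i,j)"
proof -
  have "(D * D) $$ (i,j) = (\<Sum>k<nn. D $$ (i,k) * D $$ (k,j))" by (rule mult_entry[OF D(2) D(2) ij])
  also have "\<dots> = (\<Sum>k<nn. if k = i then D $$ (i,k) * D $$ (k,j) else 0)"
    using D ij by (intro sum.cong refl) (auto simp: diagonal_mat_def)
  also have "\<dots> = D $$ (i,i) * D $$ (i,j)" using ij by simp
  finally show ?thesis .
qed

lemma ss_nil:
  assumes ss: "semisimple l" and lc: "l \<in> carrier_mat nn nn" and z: "l * l * l = 0\<^sub>m nn nn"
  shows "l = 0\<^sub>m nn nn"
proof -
  obtain D where D: "diagonal_mat D" "similar_mat l D" using ss by (auto simp: semisimple_def)
  then obtain P Q where w: "similar_mat_wit l D P Q" by (auto simp: similar_mat_def)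
  have dl: "dim_row l = nn" using lc by simp
  from w have c: "D \<in> carrier_mat nn nn" "P \<in> carrier_mat nn nn" "Q \<in> carrier_mat nn nn"
    and pq: "P * Q = 1\<^sub>m nn" and qp: "Q * P = 1\<^sub>m nn" and le: "l = P * D * Q"
    unfolding similar_mat_wit_def Let_def dl using lc by auto
  have qpx: "\<And>X. X \<in> carrier_mat nn nn \<Longrightarrow> Q * (P * X) = X"
  proof -
    fix X :: "complex mat" assume X: "X \<in> carrier_mat nn nn"
    have "Q * (P * X) = Q * P * X" using assoc_mult_mat[OF c(3) c(2) X] by simp
    thus "Q * (P * X) = X" using qp X by simp
  qed
  have le': "l = P * (D * Q)" using le c by (simp add: assoc_mult_mat[of _ nn nn _ nn _ nn])
  have cube: "l * l * l = P * (D * (D * (D * Q)))"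
    unfolding le' using c by (simp add: assoc_mult_mat[of _ nn nn _ nn _ nn] qpx)
  have "D * (D * (D * Q)) = Q * (l * l * l)" unfolding cube using c by (simp add: qpx)
  also have "\<dots> = 0\<^sub>m nn nn" using z c by simp
  finally have z1: "D * (D * (D * Q)) = 0\<^sub>m nn nn" .
  have "D * (D * D) = D * (D * (D * (Q * P)))" using c qp by simp
  also have "\<dots> = D * (D * (D * Q)) * P" using c by (simp add: assoc_mult_mat[of _ nn nn _ nn _ nn])
  also have "\<dots> = 0\<^sub>m nn nn" using z1 c by simp
  finally have z2: "D * (D * D) = 0\<^sub>m nn nn" .
  have "D = 0\<^sub>m nn nn"
  proof (rule eq_matI)
    fix i j assume "i < dim_row (0\<^sub>m nn nn)" "j < dim_col (0\<^sub>m nn nn)"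
    hence ij: "i < nn" "j < nn" by auto
    have "(D * (D * D)) $$ (i,i) = (\<Sum>k<nn. D $$ (i,k) * (D * D) $$ (k,i))"
      by (rule mult_entry[OF c(1) _ ij(1) ij(1)]) (use c in simp)
    also have "\<dots> = (\<Sum>k<nn. if k = i then D $$ (i,k) * (D * D) $$ (k,i) else 0)"
      using D(1) c ij by (intro sum.cong refl) (auto simp: diagonal_mat_def)
    also have "\<dots> = D $$ (i,i) * (D $$ (i,i) * D $$ (i,i))" using ij diag_mult[OF D(1) c(1) ij(1) ij(1)] by simp
    finally have "D $$ (i,i) * (D $$ (i,i) * D $$ (i,i)) = 0" using z2 ij by simp
    hence dii: "D $$ (i,i) = 0" by simp
    show "D $$ (i,j) = 0\<^sub>m nn nn $$ (i,j)"
      using D(1) c ij dii by (cases "i = j") (auto simp: diagonal_mat_def)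
  qed (use c in auto)
  thus ?thesis unfolding le using c by simp
qed


lemma Bv_lin_both:
  "Bv r (\<lambda>i. al * u i + be * w i) (\<lambda>i. ga * u i + de * w i)
     = al * ga * Bv r u u + (al * de + be * ga) * Bv r u w + be * de * Bv r w w"
  by (simp add: Bv_lin1 Bv_lin2 Bv_sym[of r w u] algebra_simps)

lemma Lam_reparam:
  assumes "k * (al * de - be * ga) = 1"
  shows "Lam r u w = k \<cdot>\<^sub>m Lam r (\<lambda>i. al * u i + be * w i) (\<lambda>i. ga * u i + de * w i)"
proof (rule eq_matI)
  fix i j assume "i < dim_row (k \<cdot>\<^sub>m Lam r (\<lambda>i. al * u i + be * w i) (\<lambda>i. ga * u i + de * w i))"
    "j < dim_col (k \<cdot>\<^sub>m Lam r (\<lambda>i. al * u i + be * w i) (\<lambda>i. ga * u i + de * w i))"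
  hence ij: "i < dimV r" "j < dimV r" by auto
  have "k * ((al * u i + be * w i) * (ga * u (2*r-j) + de * w (2*r-j)) - (ga * u i + de * w i) * (al * u (2*r-j) + be * w (2*r-j)))
     = (k * (al * de - be * ga)) * (u i * w (2*r-j) - w i * u (2*r-j))" by (simp add: algebra_simps)
  thus "Lam r u w $$ (i,j) = (k \<cdot>\<^sub>m Lam r (\<lambda>i. al * u i + be * w i) (\<lambda>i. ga * u i + de * w i)) $$ (i,j)"
    using ij assms by simp
qed auto

lemma alg_a:
  fixes a b c ka :: complex
  assumes h: "ka * ka = b * b - a * c" and k0: "ka \<noteq> 0" and a0: "a \<noteq> 0"
  defines "D \<equiv> -2 * a * (ka * ka)"
  shows "(b+ka) * (b+ka) * a + ((b+ka) * (-a) + (-a) * (b+ka)) * b + (-a) * (-a) * c = 0"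
    "((b-ka)/D) * ((b-ka)/D) * a + (((b-ka)/D) * (-a/D) + (-a/D) * ((b-ka)/D)) * b + (-a/D) * (-a/D) * c = 0"
    "(b+ka) * ((b-ka)/D) * a + ((b+ka) * (-a/D) + (-a) * ((b-ka)/D)) * b + (-a) * (-a/D) * c = 1"
    "ka * ((b+ka) * (-a/D) - (-a) * ((b-ka)/D)) = 1"
proof -
  have D0: "D \<noteq> 0" unfolding D_def using k0 a0 by simp
  have "(b+ka) * (b+ka) * a + ((b+ka) * (-a) + (-a) * (b+ka)) * b + (-a) * (-a) * c = a * (ka * ka - (b * b - a * c))"
    by (simp add: algebra_simps)
  thus "(b+ka) * (b+ka) * a + ((b+ka) * (-a) + (-a) * (b+ka)) * b + (-a) * (-a) * c = 0"
    using h by simp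
  have "((b-ka)/D) * ((b-ka)/D) * a + (((b-ka)/D) * (-a/D) + (-a/D) * ((b-ka)/D)) * b + (-a/D) * (-a/D) * c
     = a * ((b-ka) * (b-ka) - 2 * (b-ka) * b + a * c) / (D * D)"
    using D0 by (simp add: field_simps)
  also have "(b-ka) * (b-ka) - 2 * (b-ka) * b + a * c = ka * ka - (b * b - a * c)" by (simp add: algebra_simps)
  also have "\<dots> = 0" using h by simp
  finally show "((b-ka)/D) * ((b-ka)/D) * a + (((b-ka)/D) * (-a/D) + (-a/D) * ((b-ka)/D)) * b + (-a/D) * (-a/D) * c = 0"
    by simp
  have "(b+ka) * ((b-ka)/D) * a + ((b+ka) * (-a/D) + (-a) * ((b-ka)/D)) * b + (-a) * (-a/D) * c
     = a * ((b+ka) * (b-ka) - (b+ka) * b - (b-ka) * b + a * c) / D"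
    using D0 by (simp add: field_simps)
  also have "a * ((b+ka) * (b-ka) - (b+ka) * b - (b-ka) * b + a * c) = D + a * (ka * ka - (b * b - a * c))"
    unfolding D_def by (simp add: algebra_simps)
  also have "\<dots> = D" using h by simp
  finally show "(b+ka) * ((b-ka)/D) * a + ((b+ka) * (-a/D) + (-a) * ((b-ka)/D)) * b + (-a) * (-a/D) * c = 1"
    using D0 by simp
  have "ka * ((b+ka) * (-a/D) - (-a) * ((b-ka)/D)) = (-2 * a * (ka * ka)) / D"
    using D0 by (simp add: field_simps)
  thus "ka * ((b+ka) * (-a/D) - (-a) * ((b-ka)/D)) = 1" using D0 unfolding D_def by simp
qed

lemma find_pq_a:
  assumes K: "Bv r u w * Bv r u w - Bv r u u * Bv r w w \<noteq> 0" and a0: "Bv r u u \<noteq> 0"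
  shows "\<exists>p q k. Bv r p p = 0 \<and> Bv r q q = 0 \<and> Bv r p q = 1 \<and> Lam r u w = k \<cdot>\<^sub>m Lam r p q"
proof -
  let ?a = "Bv r u u" and ?b = "Bv r u w" and ?c = "Bv r w w"
  define ka where "ka = csqrt (?b * ?b - ?a * ?c)"
  have h: "ka * ka = ?b * ?b - ?a * ?c" unfolding ka_def using power2_csqrt[of "?b * ?b - ?a * ?c"]
    by (simp add: power2_eq_square)
  have k0: "ka \<noteq> 0" using h K by auto
  define D where "D = -2 * ?a * (ka * ka)"
  note A = alg_a[OF h k0 a0, folded D_def]
  let ?p = "\<lambda>i. (?b + ka) * u i + (- ?a) * w i"
  let ?q = "\<lambda>i. ((?b - ka) / D) * u i + (- ?a / D) * w i"
  have "Bv r ?p ?p = 0" unfolding Bv_lin_both using A(1) by simp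
  moreover have "Bv r ?q ?q = 0" unfolding Bv_lin_both using A(2) by simp
  moreover have "Bv r ?p ?q = 1" unfolding Bv_lin_both using A(3) by simp
  moreover have "Lam r u w = ka \<cdot>\<^sub>m Lam r ?p ?q" by (rule Lam_reparam) (use A(4) in simp)
  ultimately show ?thesis by blast
qed

lemma Lam_swap: "Lam r u w = (-1) \<cdot>\<^sub>m Lam r w u"
  by (rule eq_matI) auto

lemma find_pq:
  assumes K: "Bv r u w * Bv r u w - Bv r u u * Bv r w w \<noteq> 0"
  shows "\<exists>p q k. Bv r p p = 0 \<and> Bv r q q = 0 \<and> Bv r p q = 1 \<and> Lam r u w = k \<cdot>\<^sub>m Lam r p q"
proof (cases "Bv r u u \<noteq> 0")
  case True thus ?thesis using find_pq_a[OF K] by blast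
next
  case False
  hence a0: "Bv r u u = 0" by simp
  show ?thesis
  proof (cases "Bv r w w \<noteq> 0")
    case True
    have K': "Bv r w u * Bv r w u - Bv r w w * Bv r u u \<noteq> 0" using K by (simp add: Bv_sym[of r w u] mult.commute)
    obtain p q k where pq: "Bv r p p = 0" "Bv r q q = 0" "Bv r p q = 1" "Lam r w u = k \<cdot>\<^sub>m Lam r p q"
      using find_pq_a[OF K' True] by blast
    have "Lam r u w = (-k) \<cdot>\<^sub>m Lam r p q"
      unfolding Lam_swap[of r u w] pq(4) by (rule eq_matI) auto
    thus ?thesis using pq by blast
  next
    case False
    hence c0: "Bv r w w = 0" by simp
    have b0: "Bv r u w \<noteq> 0" using K a0 c0 by simp
    let ?q = "\<lambda>i. 0 * u i + (1 / Bv r u w) * w i"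
    let ?p = "\<lambda>i. 1 * u i + 0 * w i"
    have "Bv r ?p ?p = 0" unfolding Bv_lin_both using a0 c0 by simp
    moreover have "Bv r ?q ?q = 0" unfolding Bv_lin_both using a0 c0 by simp
    moreover have "Bv r ?p ?q = 1" unfolding Bv_lin_both using a0 c0 b0 by simp
    moreover have "Lam r u w = Bv r u w \<cdot>\<^sub>m Lam r ?p ?q" by (rule Lam_reparam) (use b0 in simp)
    ultimately show ?thesis by blast
  qed
qed


lemma zero_smult_Lam: "0 \<cdot>\<^sub>m Lam r u w = 0\<^sub>m (dimV r) (dimV r)"
  by (rule eq_matI) auto

lemma hvec_fw1: "r \<ge> 3 \<Longrightarrow> hvec r (fw r 1) = hvec r (eps 1)"
  by (rule hvec_eq) (auto simp: fw_def eps_def)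

lemma part1:
  assumes r3: "r \<ge> 3" and l: "l \<in> VW2 r" and ss: "semisimple l" and nz: "l \<noteq> 0\<^sub>m (dimV r) (dimV r)"
  shows "l \<in> orbit r (cline (hvec r (fw r 1)))"
proof -
  have ls: "l \<in> so r" using l by (simp add: VW2_def)
  obtain u w where lu: "l = Lam r u w" using decomp[OF ls VW2_pf[OF r3 l]] by blast
  have K: "Bv r u w * Bv r u w - Bv r u u * Bv r w w \<noteq> 0"
  proof
    assume "Bv r u w * Bv r u w - Bv r u u * Bv r w w = 0"
    hence "l * l * l = 0\<^sub>m (dimV r) (dimV r)" unfolding lu Lam_cube by (simp add: zero_smult_Lam)
    hence "l = 0\<^sub>m (dimV r) (dimV r)" using ss_nil[OF ss] ls by simp
    thus False using nz by simp
  qed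
  obtain p q k where pq: "Bv r p p = 0" "Bv r q q = 0" "Bv r p q = 1" "Lam r u w = k \<cdot>\<^sub>m Lam r p q"
    using find_pq[OF K] by blast
  have "l \<in> orbit r (cline (hvec r (eps 1)))" unfolding lu pq(4)
    by (rule orbit_lemma[OF _ pq(1-3)]) (use r3 in simp)
  thus ?thesis using hvec_fw1[OF r3] by simp
qed

lemma hvec_eps_Lam:
  assumes i: "i \<in> {1..r}"
  shows "k \<cdot>\<^sub>m hvec r (eps i) = k \<cdot>\<^sub>m Lam r (\<lambda>m. of_bool (m = i - 1)) (\<lambda>m. of_bool (m = 2*r + 1 - i))"
proof -
  have "hvec r (eps i) = Lam r (\<lambda>m. of_bool (m = i - 1)) (\<lambda>m. of_bool (m = 2*r + 1 - i))"
    using hvec_Lam[OF i, of 1] hvec_smult[of r 1 "eps i"] by simp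
  thus ?thesis by simp
qed

lemma eps_iso:
  assumes i: "i \<in> {1..r}"
  shows "Bv r (\<lambda>m. of_bool (m = i - 1)) (\<lambda>m. of_bool (m = i - 1)) = 0"
    "Bv r (\<lambda>m. of_bool (m = 2*r + 1 - i)) (\<lambda>m. of_bool (m = 2*r + 1 - i)) = 0"
    "Bv r (\<lambda>m. of_bool (m = i - 1)) (\<lambda>m. of_bool (m = 2*r + 1 - i)) = 1"
proof -
  have lt: "i - 1 < dimV r" "2*r + 1 - i < dimV r" using i by (auto simp: dimV_def)
  show "Bv r (\<lambda>m. of_bool (m = i - 1)) (\<lambda>m. of_bool (m = i - 1)) = 0"
    unfolding Bv_unit[OF lt(1)] using i by simp arith
  show "Bv r (\<lambda>m. of_bool (m = 2*r + 1 - i)) (\<lambda>m. of_bool (m = 2*r + 1 - i)) = 0"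
    unfolding Bv_unit[OF lt(2)] using i by simp arith
  show "Bv r (\<lambda>m. of_bool (m = i - 1)) (\<lambda>m. of_bool (m = 2*r + 1 - i)) = 1"
    unfolding Bv_unit[OF lt(1)] using i by simp
qed

theorem lemma7p5:
  fixes r :: nat
  assumes "r \<ge> 3"
  shows "(\<forall>l \<in> VW2 r. semisimple l \<and> l \<noteq> 0\<^sub>m (dimV r) (dimV r) \<longrightarrow>
            l \<in> orbit r (cline (hvec r (fw r 1)))
          \<or> (\<exists>i \<in> {2..r-1}. l \<in> orbit r (cline (hvec r (\<lambda>j. - fw r (i - 1) j + fw r i j))))
          \<or> l \<in> orbit r (cline (hvec r (\<lambda>j. - fw r (r - 1) j + 2 * fw r r j))))
       \<and> (\<forall>c. hvec r c \<in> VW2 r \<longleftrightarrow> hvec r c \<in> (\<Union>i \<in> {1..r}. cline (hvec r (eps i))))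
       \<and> (\<Union>i \<in> {1..r}. cline (hvec r (eps i))) = orbit r (cline (hvec r (eps 1))) \<inter> hcart r"
proof (intro conjI)
  have r3: "r \<ge> 3" by (rule assms)
  show "\<forall>l \<in> VW2 r. semisimple l \<and> l \<noteq> 0\<^sub>m (dimV r) (dimV r) \<longrightarrow>
            l \<in> orbit r (cline (hvec r (fw r 1)))
          \<or> (\<exists>i \<in> {2..r-1}. l \<in> orbit r (cline (hvec r (\<lambda>j. - fw r (i - 1) j + fw r i j))))
          \<or> l \<in> orbit r (cline (hvec r (\<lambda>j. - fw r (r - 1) j + 2 * fw r r j)))"
    using part1[OF r3] by blast
  show "\<forall>c. hvec r c \<in> VW2 r \<longleftrightarrow> hvec r c \<in> (\<Union>i \<in> {1..r}. cline (hvec r (eps i)))"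
  proof (intro allI iffI)
    fix c assume h: "hvec r c \<in> VW2 r"
    show "hvec r c \<in> (\<Union>i \<in> {1..r}. cline (hvec r (eps i)))"
      by (rule diag_lemma[OF VW2_pf[OF r3 h]]) (use r3 in simp_all)
  next
    fix c assume "hvec r c \<in> (\<Union>i \<in> {1..r}. cline (hvec r (eps i)))"
    then obtain i k where i: "i \<in> {1..r}" and e: "hvec r c = k \<cdot>\<^sub>m hvec r (eps i)"
      unfolding cline_def by blast
    have "hvec r c = Lam r (\<lambda>m. k * of_bool (m = i - 1)) (\<lambda>m. of_bool (m = 2*r + 1 - i))"
      unfolding e by (rule hvec_Lam[OF i])
    thus "hvec r c \<in> VW2 r" using Lam_VW2[OF r3] by simp
  qed
  show "(\<Union>i \<in> {1..r}. cline (hvec r (eps i))) = orbit r (cline (hvec r (eps 1))) \<inter> hcart r"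
  proof (intro equalityI subsetI)
    fix x assume "x \<in> (\<Union>i \<in> {1..r}. cline (hvec r (eps i)))"
    then obtain i k where i: "i \<in> {1..r}" and e: "x = k \<cdot>\<^sub>m hvec r (eps i)"
      unfolding cline_def by blast
    have "x \<in> orbit r (cline (hvec r (eps 1)))"
      unfolding e hvec_eps_Lam[OF i] by (rule orbit_lemma[OF _ eps_iso[OF i]]) (use r3 in simp)
    moreover have "x \<in> hcart r" unfolding e hcart_def using hvec_smult[of r k "eps i"] by (metis rangeI)
    ultimately show "x \<in> orbit r (cline (hvec r (eps 1))) \<inter> hcart r" by blast
  next
    fix x assume x: "x \<in> orbit r (cline (hvec r (eps 1))) \<inter> hcart r"
    then obtain d where d: "x = hvec r d" unfolding hcart_def by blast
    from x obtain g y where g: "g \<in> SOgrp r" "y \<in> cline (hvec r (eps 1))" "g * y = x * g"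
      and xc: "x \<in> carrier_mat (dimV r) (dimV r)" unfolding orbit_def by blast
    then obtain k where y: "y = k \<cdot>\<^sub>m hvec r (eps 1)" unfolding cline_def by blast
    have xl: "x = Lam r (mv r g (\<lambda>m. k * of_bool (m = 0))) (mv r g (\<lambda>m. of_bool (m = 2*r)))"
      by (rule orbit_rev[OF _ xc g(1)]) (use r3 g(3) y in simp_all)
    have "hvec r d \<in> (\<Union>i \<in> {1..r}. cline (hvec r (eps i)))"
      by (rule diag_lemma) (use r3 pf_Lam xl d in simp_all)
    thus "x \<in> (\<Union>i \<in> {1..r}. cline (hvec r (eps i)))" using d by simp
  qed
qed


end
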